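(* For every $\lambda\in(0,\infty)$, $u\in(0,1)$, $m\in\mathbb N$ and $\gamma\in[0,1]$, \[ \left|\frac{\lambda N^2}{2u(1-u)(N+\lambda)}\sum_{n=0}^{mN}\Big(\frac N{N+\lambda}\Big)^n\Big[\Big(\tfrac1NS_{\beta_u}(L^{n+1}(J))-\tfrac1NS_{\beta_u}(L^n(J))\Big)-\Big(\tfrac1NS_{\beta_u}(L_0^{n+1}(J))-\tfrac1NS_{\beta_u}(L_0^n(J))\Big)\Big]\right|\le\frac{40\,\Delta_Q^\gamma}{1-u}\Big(1+\frac6N\Big)^{mN}. \]
   Context: $E$ is a finite set with $N=\#E>8$ elements, listed in a fixed order; $\mathsf M_E$ is the space of complex $N\times N$ matrices indexed by $E\times E$; $|x\rangle,\langle x|$ are standard unit column/row vectors, $C^*$ is transpose. $Q$ is an irreducible stochastic matrix on $E$ with $Q(x,y)=Q(y,x)$ for all $x,y$ and $\mathrm{tr}(Q)=0$; $|Q|^s$ is defined by functional calculus (same eigenvectors, eigenvalues $|q|^s$). $I$ is the identity, $J$ the matrix with all entries $1/N$. Let $(U,V)$ be random with $\mathbb P(U=x,V=y)=\frac1NQ(x,y)$, $T=I-|U\rangle\langle U|+|U\rangle\langle V|$, $L(C)=\mathbb E[T^*CT]$, and $L_0(C)=\frac{N-2}NC+\frac1N(CQ+QC)-\frac{2\,\mathrm{tr}(C)}{N^2}Q+\frac{2\,\mathrm{tr}(C)}{N^2}I$; powers are compositions. For $u\in(0,1)$, $\beta_u$ is a random vector with i.i.d. Bernoulli($u$) entries and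 $S_{\beta_u}(C)=\mathbb E[\langle\beta_u|C|\beta_u\rangle]$. $\mathcal R^\gamma_Q(x,s)=\{y\in E:|Q^s(x,x)-Q^s(y,y)|\le\gamma\}$ and \[ \Delta_Q^\gamma=\min_{s_0\in\mathbb N}\max\left\{\max_{0\le s\le s_0}\Big(\frac{\min_{x\in E}[N-\#\mathcal R^\gamma_Q(x,s)]}{N}+\gamma\Big),\ \frac{\mathrm{tr}(|Q|^{s_0})}{N}\right\}. \] *)

theory Defs
  imports "HOL-Analysis.Analysis"
begin

text \<open>Matrices indexed by a finite type 'e (playing the role of E, N = CARD('e)).\<close>

definition mpow :: "real^'e^'e \<Rightarrow> nat \<Rightarrow> real^'e^'e" where
  "mpow A n = ((\<lambda>M. M ** A) ^^ n) (mat 1)"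

definition stochastic :: "real^'e^'e \<Rightarrow> bool" where
  "stochastic Q \<longleftrightarrow> (\<forall>x y. Q$x$y \<ge> 0) \<and> (\<forall>x. (\<Sum>y\<in>UNIV. Q$x$y) = 1)"

definition irreducible_mat :: "real^'e^'e \<Rightarrow> bool" where
  "irreducible_mat Q \<longleftrightarrow> (\<forall>x y. \<exists>n. mpow Q n $ x $ y > 0)"

definition diag_mat :: "('e \<Rightarrow> real) \<Rightarrow> real^'e^'e" where
  "diag_mat d = (\<chi> i j. if i = j then d i else 0)"

definition abs_mpow :: "real^'e^'e \<Rightarrow> nat \<Rightarrow> real^'e^'e" where
  "abs_mpow A s = (SOME M. \<exists>P d. orthogonal_matrix P \<and> A = P ** diag_mat d ** transpose P
       \<and> M = P ** diag_mat (\<lambda>i. \<bar>d i\<bar> ^ s) ** transpose P)"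

definition cmat :: "real^'e^'e \<Rightarrow> complex^'e^'e" where
  "cmat A = (\<chi> i j. complex_of_real (A$i$j))"

definition ket_bra :: "'e \<Rightarrow> 'e \<Rightarrow> complex^'e^'e" where
  "ket_bra x y = (\<chi> i j. if i = x \<and> j = y then 1 else 0)"

definition Jmat :: "complex^'e^'e" where
  "Jmat = (\<chi> i j. 1 / of_nat CARD('e))"

definition Tmat :: "'e \<Rightarrow> 'e \<Rightarrow> complex^'e^'e" where
  "Tmat x y = mat 1 - ket_bra x x + ket_bra x y"

text \<open>L(C) = E[T^* C T] with P(U=x,V=y) = Q(x,y)/N; C^* is the transpose.\<close>
definition Lop :: "real^'e^'e \<Rightarrow> complex^'e^'e \<Rightarrow> complex^'e^'e" where
  "Lop Q C = (\<Sum>x\<in>UNIV. \<Sum>y\<in>UNIV.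
      (Q$x$y / real CARD('e)) *\<^sub>R (transpose (Tmat x y) ** C ** Tmat x y))"

definition L0op :: "real^'e^'e \<Rightarrow> complex^'e^'e \<Rightarrow> complex^'e^'e" where
  "L0op Q C = (let N = of_nat CARD('e) :: complex; Qc = cmat Q in
     (\<chi> i j. (N - 2) / N * C$i$j + 1 / N * ((C ** Qc)$i$j + (Qc ** C)$i$j)
        - 2 * trace C / N^2 * Qc$i$j + 2 * trace C / N^2 * (mat 1 :: complex^'e^'e)$i$j))"

text \<open>S_{beta_u}(C) = E[<beta|C|beta>] for beta with i.i.d. Bernoulli(u) entries,
  written as the explicit finite expectation over the support set B = {x. beta_x = 1}.\<close>
definition S_beta :: "real \<Rightarrow> complex^'e^'e \<Rightarrow> complex" where
  "S_beta u C = (\<Sum>B\<in>Pow (UNIV :: 'e set).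
      complex_of_real (u ^ card B * (1 - u) ^ (CARD('e) - card B)) * (\<Sum>x\<in>B. \<Sum>y\<in>B. C$x$y))"

definition Rset :: "real^'e^'e \<Rightarrow> real \<Rightarrow> 'e \<Rightarrow> nat \<Rightarrow> 'e set" where
  "Rset Q \<gamma> x s = {y. \<bar>mpow Q s $ x $ x - mpow Q s $ y $ y\<bar> \<le> \<gamma>}"

definition Delta :: "real^'e^'e \<Rightarrow> real \<Rightarrow> real" where
  "Delta Q \<gamma> = (INF s0::nat. max
      (Max ((\<lambda>s. Min ((\<lambda>x. (real CARD('e) - real (card (Rset Q \<gamma> x s))) / real CARD('e)) ` UNIV) + \<gamma>)
            ` {0..s0}))
      (trace (abs_mpow Q s0) / real CARD('e)))"

end

theory Submission
  imports Defs
begin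


lemma quad_zero:
  fixes a b :: real
  assumes "\<And>t. 0 \<le> 2*t*a + t^2*b"
  shows "a = 0"
proof (rule ccontr)
  assume "a \<noteq> 0"
  define c where "c = \<bar>b\<bar> + 1"
  have pos: "c > 0" unfolding c_def by simp
  define t where "t = - a / c"
  have "0 \<le> 2*t*a + t^2*b" by (rule assms)
  have "t^2*b \<le> t^2 * c" unfolding c_def by (intro mult_left_mono) auto
  also have "t^2 * c = a^2 / c" unfolding t_def using pos by (simp add: power2_eq_square)
  finally have 1: "t^2*b \<le> a^2/c" .
  have 2: "2*t*a = -2*(a^2/c)" unfolding t_def by (simp add: power2_eq_square)
  have "a^2/c > 0" using pos \<open>a \<noteq> 0\<close> by simp
  thus False using 1 2 \<open>0 \<le> 2*t*a + t^2*b\<close> by linarith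
qed

lemma sym_inner:
  fixes A :: "real^'n^'n"
  assumes sym: "\<forall>i j. A$i$j = A$j$i"
  shows "x \<bullet> (A *v y) = (A *v x) \<bullet> y"
proof -
  have "x \<bullet> (A *v y) = (\<Sum>i\<in>UNIV. \<Sum>j\<in>UNIV. x$i * A$i$j * y$j)"
    unfolding inner_vec_def matrix_vector_mult_def by (simp add: sum_distrib_left mult_ac)
  also have "\<dots> = (\<Sum>j\<in>UNIV. \<Sum>i\<in>UNIV. x$i * A$i$j * y$j)" by (rule sum.swap)
  also have "\<dots> = (\<Sum>j\<in>UNIV. (\<Sum>i\<in>UNIV. A$j$i * x$i) * y$j)"
    by (simp add: sum_distrib_left sum_distrib_right sym mult_ac)
  also have "\<dots> = (A *v x) \<bullet> y"
    unfolding inner_vec_def matrix_vector_mult_def by simp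
  finally show ?thesis .
qed

lemma spectral_subspace:
  fixes A :: "real^'n^'n"
  assumes sym: "\<forall>i j. A$i$j = A$j$i"
  shows "subspace S \<Longrightarrow> (\<forall>x\<in>S. A *v x \<in> S) \<Longrightarrow>
    \<exists>B. B \<subseteq> S \<and> pairwise orthogonal B \<and> (\<forall>b\<in>B. norm b = 1 \<and> (\<exists>l. A *v b = l *\<^sub>R b)) \<and> S \<subseteq> span B"
proof (induction "dim S" arbitrary: S rule: less_induct)
  case less
  note sub = less.prems(1) and inv = less.prems(2)
  show ?case
  proof (cases "S \<subseteq> {0}")
    case True then show ?thesis by (intro exI[of _ "{}"]) auto
  next
    case False
    then obtain z where z: "z \<in> S" "z \<noteq> 0" by auto
    let ?K = "S \<inter> sphere 0 1"
    have cK: "compact ?K" by (intro closed_Int_compact closed_subspace sub compact_sphere)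
    have "z /\<^sub>R norm z \<in> ?K" using z sub by (auto simp: subspace_scale)
    hence ne: "?K \<noteq> {}" by blast
    have cont: "continuous_on ?K (\<lambda>x. x \<bullet> (A *v x))"
      by (intro continuous_intros linear_continuous_on linear_conv_bounded_linear[THEN iffD1]) auto
    obtain v where vK: "v \<in> ?K" and vmax: "\<forall>x\<in>?K. x \<bullet> (A *v x) \<le> v \<bullet> (A *v v)"
      using continuous_attains_sup[OF cK ne cont] by blast
    define l where "l = v \<bullet> (A *v v)"
    have vS: "v \<in> S" and vn: "norm v = 1" using vK by auto
    have vv: "v \<bullet> v = 1" using vn by (simp add: norm_eq_1)
    have bound: "x \<bullet> (A *v x) \<le> l * (x \<bullet> x)" if "x \<in> S" for x
    proof (cases "x = 0")
      case True then show ?thesis by simp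
    next
      case False
      define y where "y = x /\<^sub>R norm x"
      have "y \<in> ?K" using that False sub by (auto simp: y_def subspace_scale)
      hence "y \<bullet> (A *v y) \<le> l" using vmax l_def by blast
      moreover have "y \<bullet> (A *v y) = (x \<bullet> (A *v x)) / (norm x)^2"
        by (simp add: y_def matrix_vector_mult_scaleR power2_eq_square divide_inverse mult_ac)
      moreover have "(norm x)^2 = x \<bullet> x" by (simp add: power2_norm_eq_inner)
      moreover have "norm x > 0" using False by simp
      ultimately show ?thesis by (simp add: divide_le_eq)
    qed
    define Bop where "Bop x = l *\<^sub>R x - A *v x" for x
    have Bop_lin: "Bop (a + t *\<^sub>R b) = Bop a + t *\<^sub>R Bop b" for a b t
      by (simp add: Bop_def algebra_simps matrix_vector_mult_scaleR matrix_vector_right_distrib)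
    have Bop_sym: "a \<bullet> Bop b = b \<bullet> Bop a" for a b
      by (simp add: Bop_def inner_diff_right sym_inner[OF sym, of a b] inner_commute)
    have qpos: "0 \<le> w \<bullet> Bop w" if "w \<in> S" for w
      using bound[OF that] by (simp add: Bop_def inner_diff_right)
    have qv: "v \<bullet> Bop v = 0" by (simp add: Bop_def inner_diff_right vv l_def)
    have BvS: "Bop v \<in> S" using sub inv vS by (simp add: Bop_def subspace_diff subspace_scale)
    have key: "w \<bullet> Bop v = 0" if "w \<in> S" for w
    proof (rule quad_zero)
      fix t :: real
      have "v + t *\<^sub>R w \<in> S" using sub vS that by (simp add: subspace_add subspace_scale)
      hence "0 \<le> (v + t *\<^sub>R w) \<bullet> Bop (v + t *\<^sub>R w)" by (rule qpos)
      also have "\<dots> = v \<bullet> Bop v + t * (v \<bullet> Bop w) + t * (w \<bullet> Bop v) + t^2 * (w \<bullet> Bop w)"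
        by (simp add: Bop_lin inner_add_left inner_add_right power2_eq_square algebra_simps)
      also have "\<dots> = 2*t*(w \<bullet> Bop v) + t^2 * (w \<bullet> Bop w)"
        using qv Bop_sym[of v w] by simp
      finally show "0 \<le> 2*t*(w \<bullet> Bop v) + t^2 * (w \<bullet> Bop w)" .
    qed
    have "Bop v = 0" using key[OF BvS] by simp
    hence eig: "A *v v = l *\<^sub>R v" by (simp add: Bop_def)
    define S' where "S' = S \<inter> {x. orthogonal v x}"
    have sub': "subspace S'" unfolding S'_def
      by (intro subspace_inter sub subspace_orthogonal_to_vector)
    have inv': "\<forall>x\<in>S'. A *v x \<in> S'"
    proof
      fix x assume "x \<in> S'"
      hence xS: "x \<in> S" and xo: "v \<bullet> x = 0" by (auto simp: S'_def orthogonal_def)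
      have "v \<bullet> (A *v x) = (A *v v) \<bullet> x" by (rule sym_inner[OF sym])
      also have "\<dots> = 0" using eig xo by simp
      finally show "A *v x \<in> S'" using inv xS by (auto simp: S'_def orthogonal_def)
    qed
    have "S' \<subset> S"
    proof -
      have "v \<notin> S'" using vv by (auto simp: S'_def orthogonal_def)
      thus ?thesis using vS by (auto simp: S'_def)
    qed
    moreover have e1: "span S' = S'" by (rule span_eq_iff[THEN iffD2, OF sub'])
    moreover have e2: "span S = S" by (rule span_eq_iff[THEN iffD2, OF sub])
    ultimately have "span S' \<subset> span S" by (simp only: e1 e2)
    hence "dim S' < dim S" by (rule dim_psubset)
    from less.hyps[OF this sub' inv'] obtain B' where
      B': "B' \<subseteq> S'" "pairwise orthogonal B'" "\<forall>b\<in>B'. norm b = 1 \<and> (\<exists>l. A *v b = l *\<^sub>R b)" "S' \<subseteq> span B'"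
      by blast
    show ?thesis
    proof (intro exI[of _ "insert v B'"] conjI)
      show "insert v B' \<subseteq> S" using B'(1) vS by (auto simp: S'_def)
      show "pairwise orthogonal (insert v B')"
        using B'(1,2) by (auto simp: pairwise_insert S'_def orthogonal_commute)
      show "\<forall>b\<in>insert v B'. norm b = 1 \<and> (\<exists>l. A *v b = l *\<^sub>R b)" using B'(3) vn eig by auto
      show "S \<subseteq> span (insert v B')"
      proof
        fix x assume xS: "x \<in> S"
        have "x - (v \<bullet> x) *\<^sub>R v \<in> S'"
          using xS vS sub vv by (auto simp: S'_def orthogonal_def subspace_diff subspace_scale inner_diff_right)
        hence "x - (v \<bullet> x) *\<^sub>R v \<in> span (insert v B')" using B'(4) span_mono[of B' "insert v B'"] by blast
        moreover have "(v \<bullet> x) *\<^sub>R v \<in> span (insert v B')" by (simp add: span_base span_mul)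
        ultimately have "(x - (v \<bullet> x) *\<^sub>R v) + (v \<bullet> x) *\<^sub>R v \<in> span (insert v B')" by (rule span_add)
        thus "x \<in> span (insert v B')" by simp
      qed
    qed
  qed
qed


lemma spectral:
  fixes A :: "real^'n^'n"
  assumes sym: "\<forall>i j. A$i$j = A$j$i"
  shows "\<exists>P d. orthogonal_matrix P \<and> A = P ** diag_mat d ** transpose P"
proof -
  obtain B where B: "pairwise orthogonal B" "\<forall>b\<in>B. norm b = 1 \<and> (\<exists>l. A *v b = l *\<^sub>R b)"
      "UNIV \<subseteq> span B"
    using spectral_subspace[OF sym, of UNIV] by auto
  have "0 \<notin> B" using B(2) by force
  hence ind: "independent B" using B(1) pairwise_orthogonal_independent by blast
  hence finB: "finite B" using independent_bound by blast
  have "card B = dim B" using dim_eq_card_independent[OF ind] by simp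
  also have "\<dots> = dim (span B)" by simp
  also have "span B = UNIV" using B(3) by auto
  also have "dim (UNIV :: (real^'n) set) = CARD('n)" by simp
  finally have cB: "card B = CARD('n)" .
  obtain g where g: "bij_betw g (UNIV::'n set) B"
    using finite_same_card_bij[of "UNIV::'n set" B] finB cB by auto
  have gB: "g j \<in> B" for j using g by (auto simp: bij_betw_def)
  have ginj: "g j = g k \<Longrightarrow> j = k" for j k using g by (auto simp: bij_betw_def inj_on_def)
  define d where "d j = (SOME l. A *v g j = l *\<^sub>R g j)" for j
  have col: "A *v g j = d j *\<^sub>R g j" for j
    unfolding d_def using B(2) gB[of j] by (metis (mono_tags, lifting) someI_ex)
  define P where "P = (\<chi> i j. g j $ i)"
  have gg: "g j \<bullet> g k = (if j = k then 1 else 0)" for j k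
  proof (cases "j = k")
    case True
    then show ?thesis using B(2) gB[of j] by (simp add: norm_eq_1)
  next
    case False
    hence "g j \<noteq> g k" using ginj by blast
    then show ?thesis using B(1) gB[of j] gB[of k] False by (auto simp: pairwise_def orthogonal_def)
  qed
  have gg': "(\<Sum>k\<in>UNIV. g j $ k * g i $ k) = (if j = i then 1 else 0)" for j i
    using gg[of j i] by (simp add: inner_vec_def)
  have "transpose P ** P = mat 1"
    unfolding matrix_matrix_mult_def P_def transpose_def mat_def
    by (simp add: vec_eq_iff gg')
  hence oP: "orthogonal_matrix P" by (simp add: orthogonal_matrix)
  hence PPt: "P ** transpose P = mat 1" by (simp add: orthogonal_matrix_def)
  have AP: "A ** P = P ** diag_mat d"
  proof -
    have "(A ** P)$i$j = (P ** diag_mat d)$i$j" for i j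
    proof -
      have "(A ** P)$i$j = (A *v g j)$i"
        unfolding matrix_matrix_mult_def matrix_vector_mult_def P_def by simp
      also have "\<dots> = d j * g j $ i" using col by simp
      also have "\<dots> = (P ** diag_mat d)$i$j"
        unfolding matrix_matrix_mult_def diag_mat_def P_def
        by (simp add: if_distrib[where f="\<lambda>x. _ * x"] sum.delta' cong: if_cong)
      finally show ?thesis .
    qed
    thus ?thesis by (simp add: vec_eq_iff)
  qed
  have "A = A ** (P ** transpose P)" by (simp add: PPt)
  also have "\<dots> = P ** diag_mat d ** transpose P" by (simp add: matrix_mul_assoc AP)
  finally show ?thesis using oP by blast
qed



lemma mpow_Suc: "mpow A (Suc n) = mpow A n ** A"
  by (simp add: mpow_def)

lemma mpow_0: "mpow A 0 = mat 1"
  by (simp add: mpow_def)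

lemma mpow_Suc': "mpow A (Suc n) = A ** mpow A n"
proof (induction n)
  case 0 then show ?case by (simp add: mpow_def)
next
  case (Suc n)
  have "mpow A (Suc (Suc n)) = mpow A (Suc n) ** A" by (rule mpow_Suc)
  also have "\<dots> = A ** mpow A n ** A" using Suc by simp
  also have "\<dots> = A ** mpow A (Suc n)" by (simp add: mpow_Suc matrix_mul_assoc)
  finally show ?case .
qed

lemma stoch_mpow:
  fixes Q :: "real^'e^'e"
  assumes "stochastic Q"
  shows "(\<forall>x y. mpow Q n $ x $ y \<ge> 0) \<and> (\<forall>x. (\<Sum>y\<in>UNIV. mpow Q n $ x $ y) = 1)"
proof (induction n)
  case 0 then show ?case by (simp add: mpow_0 mat_def sum.delta)
next
  case (Suc n)
  have Qn: "\<forall>x y. Q$x$y \<ge> 0" "\<forall>x. (\<Sum>y\<in>UNIV. Q$x$y) = 1" using assms by (auto simp: stochastic_def)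
  show ?case
  proof safe
    fix x y
    show "mpow Q (Suc n) $ x $ y \<ge> 0" using Suc Qn
      by (auto simp: mpow_Suc matrix_matrix_mult_def intro!: sum_nonneg)
  next
    fix x
    have "(\<Sum>y\<in>UNIV. mpow Q (Suc n) $ x $ y) = (\<Sum>y\<in>UNIV. \<Sum>k\<in>UNIV. mpow Q n $ x $ k * Q $ k $ y)"
      by (simp add: mpow_Suc matrix_matrix_mult_def)
    also have "\<dots> = (\<Sum>k\<in>UNIV. mpow Q n $ x $ k * (\<Sum>y\<in>UNIV. Q $ k $ y))"
      unfolding sum_distrib_left by (rule sum.swap)
    also have "\<dots> = 1" using Suc Qn by simp
    finally show "(\<Sum>y\<in>UNIV. mpow Q (Suc n) $ x $ y) = 1" .
  qed
qed

lemma stoch_mpow_le1: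
  fixes Q :: "real^'e^'e"
  assumes "stochastic Q"
  shows "mpow Q n $ x $ y \<le> 1" "mpow Q n $ x $ y \<ge> 0"
proof -
  have "mpow Q n $ x $ y \<le> (\<Sum>y\<in>UNIV. mpow Q n $ x $ y)"
    using stoch_mpow[OF assms] by (intro member_le_sum) auto
  thus "mpow Q n $ x $ y \<le> 1" using stoch_mpow[OF assms] by simp
  show "mpow Q n $ x $ y \<ge> 0" using stoch_mpow[OF assms] by simp
qed

lemma diag_mat_mult: "diag_mat a ** diag_mat b = diag_mat (\<lambda>i. a i * b i)"
  unfolding diag_mat_def matrix_matrix_mult_def
  by (simp add: vec_eq_iff if_distrib[where f="\<lambda>x. x * _"] sum.delta cong: if_cong)

lemma diag_mat_1: "diag_mat (\<lambda>i. 1) = mat 1"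
  by (simp add: diag_mat_def mat_def)

lemma conj_entry: "(P ** diag_mat e ** transpose P)$a$b = (\<Sum>i\<in>UNIV. P$a$i * e i * P$b$i)"
  unfolding diag_mat_def matrix_matrix_mult_def transpose_def
  by (simp add: if_distrib[where f="\<lambda>x. _ * x"] if_distrib[where f="\<lambda>x. x * _"] sum.delta cong: if_cong)

lemma mpow_spectral:
  assumes oP: "orthogonal_matrix P" and Q: "Q = P ** diag_mat d ** transpose P"
  shows "mpow Q s = P ** diag_mat (\<lambda>i. d i ^ s) ** transpose P"
proof (induction s)
  case 0
  have "P ** transpose P = mat 1" using oP by (simp add: orthogonal_matrix_def)
  then show ?case by (simp add: mpow_0 diag_mat_1)
next
  case (Suc s)
  have PtP: "transpose P ** P = mat 1" using oP by (simp add: orthogonal_matrix_def)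
  have "mpow Q (Suc s) = (P ** diag_mat (\<lambda>i. d i ^ s) ** transpose P) ** (P ** diag_mat d ** transpose P)"
    using Suc Q by (simp add: mpow_Suc)
  also have "\<dots> = P ** diag_mat (\<lambda>i. d i ^ s) ** (transpose P ** P) ** diag_mat d ** transpose P"
    by (simp add: matrix_mul_assoc)
  also have "\<dots> = P ** (diag_mat (\<lambda>i. d i ^ s) ** diag_mat d) ** transpose P"
    by (simp add: PtP matrix_mul_assoc)
  also have "\<dots> = P ** diag_mat (\<lambda>i. d i ^ Suc s) ** transpose P"
    by (simp add: diag_mat_mult mult.commute)
  finally show ?case .
qed

lemma eig_bound:
  fixes Q :: "real^'e^'e"
  assumes st: "stochastic Q" and oP: "orthogonal_matrix P" and Q: "Q = P ** diag_mat d ** transpose P"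
  shows "\<bar>d i\<bar> \<le> 1"
proof -
  have PtP: "transpose P ** P = mat 1" using oP by (simp add: orthogonal_matrix_def)
  have "Q ** P = P ** diag_mat d ** (transpose P ** P)" using Q by (simp add: matrix_mul_assoc)
  hence QP: "Q ** P = P ** diag_mat d" using PtP by simp
  have colsum: "(\<Sum>k\<in>UNIV. P$k$i * P$k$i) = 1"
    using arg_cong[OF PtP, of "\<lambda>M. M$i$i"] by (simp add: matrix_matrix_mult_def transpose_def mat_def)
  obtain y where ymax: "\<forall>k. \<bar>P$k$i\<bar> \<le> \<bar>P$y$i\<bar>"
  proof -
    have "finite ((\<lambda>k. \<bar>P$k$i\<bar>) ` UNIV)" "(\<lambda>k. \<bar>P$k$i\<bar>) ` UNIV \<noteq> {}" by auto
    from Max_in[OF this] obtain y where "\<bar>P$y$i\<bar> = Max ((\<lambda>k. \<bar>P$k$i\<bar>) ` UNIV)"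
      by (metis (no_types, lifting) imageE)
    moreover have "\<bar>P$k$i\<bar> \<le> Max ((\<lambda>k. \<bar>P$k$i\<bar>) ` UNIV)" for k by (rule Max_ge) auto
    ultimately show ?thesis using that by metis
  qed
  have "P$y$i \<noteq> 0"
  proof
    assume "P$y$i = 0"
    hence "\<forall>k. P$k$i = 0" using ymax by simp
    thus False using colsum by simp
  qed
  hence pos: "\<bar>P$y$i\<bar> > 0" by simp
  have "P$y$i * d i = (Q ** P)$y$i" using QP by (simp add: matrix_matrix_mult_def diag_mat_def
      if_distrib[where f="\<lambda>x. _ * x"] sum.delta cong: if_cong)
  also have "\<dots> = (\<Sum>k\<in>UNIV. Q$y$k * P$k$i)" by (simp add: matrix_matrix_mult_def)
  finally have eq: "P$y$i * d i = (\<Sum>k\<in>UNIV. Q$y$k * P$k$i)" .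
  have Qn: "\<forall>x y. Q$x$y \<ge> 0" "\<forall>x. (\<Sum>y\<in>UNIV. Q$x$y) = 1" using st by (auto simp: stochastic_def)
  have "\<bar>P$y$i\<bar> * \<bar>d i\<bar> = \<bar>\<Sum>k\<in>UNIV. Q$y$k * P$k$i\<bar>" using eq by (metis abs_mult)
  also have "\<dots> \<le> (\<Sum>k\<in>UNIV. Q$y$k * \<bar>P$k$i\<bar>)"
    using Qn by (intro order_trans[OF sum_abs]) (simp add: abs_mult)
  also have "\<dots> \<le> (\<Sum>k\<in>UNIV. Q$y$k * \<bar>P$y$i\<bar>)"
    using Qn ymax by (intro sum_mono mult_left_mono) auto
  also have "\<dots> = \<bar>P$y$i\<bar>" using Qn by (simp add: sum_distrib_right[symmetric])
  finally show ?thesis using pos by (simp add: mult_le_cancel_left1)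
qed



lemma abs_mpow_trace_bound:
  fixes Q :: "real^'e^'e"
  assumes st: "stochastic Q" and sym: "\<forall>i j. Q$i$j = Q$j$i" and le: "s0 \<le> s"
  shows "(\<Sum>y\<in>UNIV. \<bar>mpow Q s $ y $ y\<bar>) \<le> trace (abs_mpow Q s0)"
proof -
  obtain P d where Pd: "orthogonal_matrix P" "Q = P ** diag_mat d ** transpose P"
    using spectral[OF sym] by blast
  have ex: "\<exists>M. \<exists>P d. orthogonal_matrix P \<and> Q = P ** diag_mat d ** transpose P
       \<and> M = P ** diag_mat (\<lambda>i. \<bar>d i\<bar> ^ s0) ** transpose P"
    using Pd by blast
  obtain P' d' where P'd': "orthogonal_matrix P'" "Q = P' ** diag_mat d' ** transpose P'"
    "abs_mpow Q s0 = P' ** diag_mat (\<lambda>i. \<bar>d' i\<bar> ^ s0) ** transpose P'"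
    using someI_ex[OF ex] unfolding abs_mpow_def by blast
  have db: "\<bar>d' i\<bar> \<le> 1" for i by (rule eig_bound[OF st P'd'(1,2)])
  have "(\<Sum>y\<in>UNIV. \<bar>mpow Q s $ y $ y\<bar>) = (\<Sum>y\<in>UNIV. \<bar>\<Sum>i\<in>UNIV. P'$y$i * d' i ^ s * P'$y$i\<bar>)"
    by (simp add: mpow_spectral[OF P'd'(1,2)] conj_entry)
  also have "\<dots> \<le> (\<Sum>y\<in>UNIV. \<Sum>i\<in>UNIV. P'$y$i * \<bar>d' i\<bar> ^ s0 * P'$y$i)"
  proof (intro sum_mono order_trans[OF sum_abs])
    fix y i
    have "\<bar>d' i\<bar> ^ s \<le> \<bar>d' i\<bar> ^ s0" using db le by (intro power_decreasing) auto
    hence "(P'$y$i * P'$y$i) * \<bar>d' i\<bar> ^ s \<le> (P'$y$i * P'$y$i) * \<bar>d' i\<bar> ^ s0"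
      by (intro mult_left_mono) auto
    thus "\<bar>P'$y$i * d' i ^ s * P'$y$i\<bar> \<le> P'$y$i * \<bar>d' i\<bar> ^ s0 * P'$y$i"
      by (simp add: abs_mult power_abs mult_ac)
  qed
  also have "\<dots> = trace (abs_mpow Q s0)"
    by (simp add: P'd'(3) trace_def conj_entry)
  finally show ?thesis .
qed

definition dg :: "complex^'e^'e \<Rightarrow> real" where
  "dg C = (\<Sum>y\<in>UNIV. norm (C$y$y - trace C / of_nat CARD('e)))"

lemma dg_le: fixes C :: "complex^'e^'e" shows "dg C \<le> 2 * (\<Sum>y\<in>UNIV. norm (C$y$y - c))"
proof -
  define S where "S = (\<Sum>y\<in>UNIV. norm (C$y$y - c))"
  define N where "N = real CARD('e)"
  have Npos: "N > 0" by (simp add: N_def finite_UNIV_card_ge_0)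
  have "trace C / of_nat CARD('e) - c = (\<Sum>y\<in>UNIV. C$y$y - c) / of_nat CARD('e)"
    by (simp add: trace_def sum_subtractf field_simps)
  hence "norm (trace C / of_nat CARD('e) - c) = norm (\<Sum>y\<in>UNIV. C$y$y - c) / N"
    by (simp add: N_def norm_divide)
  also have "\<dots> \<le> S / N" unfolding S_def using Npos by (intro divide_right_mono norm_sum) auto
  finally have tc: "norm (trace C / of_nat CARD('e) - c) \<le> S / N" .
  have "dg C \<le> (\<Sum>y\<in>UNIV. norm (C$y$y - c) + norm (trace C / of_nat CARD('e) - c))"
    unfolding dg_def
  proof (intro sum_mono)
    fix y
    show "norm (C$y$y - trace C / of_nat CARD('e)) \<le> norm (C$y$y - c) + norm (trace C / of_nat CARD('e) - c)"
      using norm_triangle_ineq4[of "C$y$y - c" "trace C / of_nat CARD('e) - c"] by simp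
  qed
  also have "\<dots> = S + N * norm (trace C / of_nat CARD('e) - c)"
    by (simp add: S_def N_def sum.distrib)
  also have "\<dots> \<le> S + N * (S / N)" using tc Npos by (intro add_left_mono mult_left_mono) auto
  also have "\<dots> = 2 * S" using Npos by simp
  finally show ?thesis by (simp add: S_def)
qed


lemma dg_cmat_le:
  fixes A :: "real^'e^'e"
  shows "dg (cmat A) \<le> 2 * (\<Sum>y\<in>UNIV. \<bar>A$y$y - c\<bar>)"
proof -
  have "dg (cmat A) \<le> 2 * (\<Sum>y\<in>UNIV. norm (cmat A$y$y - complex_of_real c))" by (rule dg_le)
  also have "(\<Sum>y\<in>UNIV. norm (cmat A$y$y - complex_of_real c)) = (\<Sum>y\<in>UNIV. \<bar>A$y$y - c\<bar>)"
    by (simp add: cmat_def flip: of_real_diff)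
  finally show ?thesis .
qed

lemma dg_mpow_Delta:
  fixes Q :: "real^'e^'e"
  assumes st: "stochastic Q" and sym: "\<forall>i j. Q$i$j = Q$j$i" and g0: "0 \<le> \<gamma>"
  shows "dg (cmat (mpow Q s)) \<le> 2 * real CARD('e) * Delta Q \<gamma>"
proof -
  define N where "N = real CARD('e)"
  have Npos: "N > 0" by (simp add: N_def finite_UNIV_card_ge_0)
  define f where "f s x = (real CARD('e) - real (card (Rset Q \<gamma> x s))) / real CARD('e)" for s x
  define V where "V s0 = max (Max ((\<lambda>s. Min ((\<lambda>x. f s x) ` UNIV) + \<gamma>) ` {0..s0}))
      (trace (abs_mpow Q s0) / real CARD('e))" for s0
  have DV: "Delta Q \<gamma> = (INF s0. V s0)" by (simp add: Delta_def V_def f_def)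
  have ent: "0 \<le> mpow Q s $ x $ y" "mpow Q s $ x $ y \<le> 1" for x y
    using stoch_mpow_le1[OF st] by auto
  have main: "\<exists>c. (\<Sum>y\<in>UNIV. \<bar>mpow Q s $ y $ y - c\<bar>) \<le> N * V s0" for s0
  proof (cases "s \<le> s0")
    case True
    have "finite ((\<lambda>x. f s x) ` UNIV)" "(\<lambda>x. f s x) ` UNIV \<noteq> {}" by auto
    from Min_in[OF this] obtain x0 where x0: "f s x0 = Min ((\<lambda>x. f s x) ` UNIV)"
      by (metis (no_types, lifting) imageE)
    define R where "R = Rset Q \<gamma> x0 s"
    have pt: "\<bar>mpow Q s $ y $ y - mpow Q s $ x0 $ x0\<bar> \<le> \<gamma> + (if y \<in> R then 0 else 1)" for y
    proof (cases "y \<in> R")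
      case True
      then show ?thesis by (simp add: R_def Rset_def abs_minus_commute)
    next
      case False
      have "\<bar>mpow Q s $ y $ y - mpow Q s $ x0 $ x0\<bar> \<le> 1"
        using ent[of y y] ent[of x0 x0] by (simp add: abs_le_iff)
      then show ?thesis using False g0 by simp
    qed
    have cR: "card R \<le> CARD('e)" by (rule card_mono) auto
    have "(\<Sum>y\<in>UNIV. \<bar>mpow Q s $ y $ y - mpow Q s $ x0 $ x0\<bar>) \<le> (\<Sum>y\<in>UNIV. \<gamma> + (if y \<in> R then 0 else 1))"
      by (intro sum_mono pt)
    also have "\<dots> = N * \<gamma> + real (card (- R))"
      by (simp add: sum.distrib N_def sum.If_cases Compl_eq_Diff_UNIV)
    also have "real (card (- R)) = N - real (card R)"
      using cR by (simp add: Compl_eq_Diff_UNIV card_Diff_subset N_def of_nat_diff)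
    also have "N * \<gamma> + (N - real (card R)) = N * (f s x0 + \<gamma>)"
      using Npos by (simp add: f_def R_def N_def field_simps)
    also have "f s x0 + \<gamma> \<le> Max ((\<lambda>s. Min ((\<lambda>x. f s x) ` UNIV) + \<gamma>) ` {0..s0})"
      unfolding x0 using True by (intro Max_ge) auto
    hence "N * (f s x0 + \<gamma>) \<le> N * V s0"
      using Npos unfolding V_def by (intro mult_left_mono) auto
    finally show ?thesis by blast
  next
    case False
    have "(\<Sum>y\<in>UNIV. \<bar>mpow Q s $ y $ y - 0\<bar>) \<le> trace (abs_mpow Q s0)"
      using abs_mpow_trace_bound[OF st sym, of s0 s] False by simp
    also have "\<dots> = N * (trace (abs_mpow Q s0) / real CARD('e))" using Npos by (simp add: N_def)
    also have "\<dots> \<le> N * V s0" using Npos unfolding V_def by (intro mult_left_mono) auto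
    finally show ?thesis by blast
  qed
  have "dg (cmat (mpow Q s)) / (2 * N) \<le> V s0" for s0
  proof -
    obtain c where c: "(\<Sum>y\<in>UNIV. \<bar>mpow Q s $ y $ y - c\<bar>) \<le> N * V s0" using main by blast
    have "dg (cmat (mpow Q s)) \<le> 2 * (N * V s0)" using dg_cmat_le[of "mpow Q s" c] c by linarith
    thus ?thesis using Npos by (simp add: divide_le_eq mult_ac)
  qed
  hence "dg (cmat (mpow Q s)) / (2 * N) \<le> (INF s0. V s0)" by (intro cINF_greatest) auto
  thus ?thesis using Npos DV by (simp add: divide_le_eq N_def mult_ac)
qed



definition fm :: "'e \<Rightarrow> 'e \<Rightarrow> 'e \<Rightarrow> 'e" where
  "fm x y a = (if a = x then y else a)"

definition nrm :: "complex^'e^'e \<Rightarrow> real" where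
  "nrm C = (\<Sum>i\<in>UNIV. \<Sum>j\<in>UNIV. norm (C$i$j))"

definition msum :: "complex^'e^'e \<Rightarrow> complex" where
  "msum C = (\<Sum>i\<in>UNIV. \<Sum>j\<in>UNIV. C$i$j)"

lemma Tmat_entry: "Tmat x y $ b $ j = (if fm x y b = j then 1 else 0)"
  by (auto simp: Tmat_def ket_bra_def mat_def fm_def)

lemma swap4:
  "(\<Sum>i\<in>A. \<Sum>j\<in>B. \<Sum>a\<in>C. \<Sum>b\<in>D. h i j a b) = (\<Sum>a\<in>C. \<Sum>b\<in>D. \<Sum>i\<in>A. \<Sum>j\<in>B. h i j a b)"
proof -
  have "(\<Sum>i\<in>A. \<Sum>j\<in>B. \<Sum>a\<in>C. \<Sum>b\<in>D. h i j a b) = (\<Sum>i\<in>A. \<Sum>a\<in>C. \<Sum>j\<in>B. \<Sum>b\<in>D. h i j a b)"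
    by (intro sum.cong refl sum.swap)
  also have "\<dots> = (\<Sum>a\<in>C. \<Sum>i\<in>A. \<Sum>j\<in>B. \<Sum>b\<in>D. h i j a b)" by (rule sum.swap)
  also have "\<dots> = (\<Sum>a\<in>C. \<Sum>i\<in>A. \<Sum>b\<in>D. \<Sum>j\<in>B. h i j a b)"
    by (intro sum.cong refl sum.swap)
  also have "\<dots> = (\<Sum>a\<in>C. \<Sum>b\<in>D. \<Sum>i\<in>A. \<Sum>j\<in>B. h i j a b)"
    by (intro sum.cong refl sum.swap)
  finally show ?thesis .
qed

lemma swap3:
  "(\<Sum>i\<in>A. \<Sum>j\<in>B. \<Sum>k\<in>C. h i j k) = (\<Sum>k\<in>C. \<Sum>i\<in>A. \<Sum>j\<in>B. h i j k)"
proof -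
  have "(\<Sum>i\<in>A. \<Sum>j\<in>B. \<Sum>k\<in>C. h i j k) = (\<Sum>i\<in>A. \<Sum>k\<in>C. \<Sum>j\<in>B. h i j k)"
    by (intro sum.cong refl sum.swap)
  also have "\<dots> = (\<Sum>k\<in>C. \<Sum>i\<in>A. \<Sum>j\<in>B. h i j k)" by (rule sum.swap)
  finally show ?thesis .
qed

lemma if01: "(if P then 1 else 0) * c * (if Q then 1 else 0) = (if P \<and> Q then c else (0::complex))"
  by simp

lemma TCT_entry:
  fixes C :: "complex^'e^'e"
  shows "(transpose (Tmat x y) ** C ** Tmat x y)$i$j =
    (\<Sum>a\<in>UNIV. \<Sum>b\<in>UNIV. if fm x y a = i \<and> fm x y b = j then C$a$b else 0)"
proof -
  have "(transpose (Tmat x y) ** C ** Tmat x y)$i$j =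
      (\<Sum>b\<in>UNIV. (\<Sum>a\<in>UNIV. Tmat x y $ a $ i * C$a$b) * Tmat x y $ b $ j)"
    by (simp add: matrix_matrix_mult_def transpose_def)
  also have "\<dots> = (\<Sum>b\<in>UNIV. \<Sum>a\<in>UNIV. if fm x y a = i \<and> fm x y b = j then C$a$b else 0)"
    unfolding Tmat_entry sum_distrib_right if01 ..
  also have "\<dots> = (\<Sum>a\<in>UNIV. \<Sum>b\<in>UNIV. if fm x y a = i \<and> fm x y b = j then C$a$b else 0)"
    by (rule sum.swap)
  finally show ?thesis .
qed

lemma delta2:
  fixes p :: "'a::finite" and q :: "'c::finite" and v :: "'b::comm_monoid_add"
  shows "(\<Sum>i\<in>UNIV. \<Sum>j\<in>UNIV. if p = i \<and> q = j then v else 0) = v"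
proof -
  have "(\<Sum>i\<in>UNIV. \<Sum>j\<in>UNIV. if p = i \<and> q = j then v else 0) =
        (\<Sum>i\<in>UNIV. if p = i then (\<Sum>j\<in>UNIV. if q = j then v else 0) else 0)"
    by (intro sum.cong refl) auto
  also have "\<dots> = v" by simp
  finally show ?thesis .
qed

lemma nrm_TCT: "nrm (transpose (Tmat x y) ** C ** Tmat x y) \<le> nrm C"
proof -
  have "nrm (transpose (Tmat x y) ** C ** Tmat x y) \<le>
      (\<Sum>i\<in>UNIV. \<Sum>j\<in>UNIV. \<Sum>a\<in>UNIV. \<Sum>b\<in>UNIV. if fm x y a = i \<and> fm x y b = j then norm (C$a$b) else 0)"
    unfolding nrm_def TCT_entry
    by (intro sum_mono order_trans[OF norm_sum]) (simp add: if_distrib[where f=norm])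
  also have "\<dots> = nrm C" by (subst swap4) (simp only: delta2 nrm_def)
  finally show ?thesis .
qed

lemma msum_TCT: "msum (transpose (Tmat x y) ** C ** Tmat x y) = msum C"
  unfolding msum_def TCT_entry by (subst swap4) (simp only: delta2)

lemma nrm_sum: "nrm (\<Sum>k\<in>K. A k) \<le> (\<Sum>k\<in>K. nrm (A k))"
proof -
  have "nrm (\<Sum>k\<in>K. A k) \<le> (\<Sum>i\<in>UNIV. \<Sum>j\<in>UNIV. \<Sum>k\<in>K. norm (A k $ i $ j))"
    unfolding nrm_def by (intro sum_mono) (simp add: norm_sum)
  also have "\<dots> = (\<Sum>k\<in>K. nrm (A k))"
    unfolding nrm_def by (rule swap3)
  finally show ?thesis .
qed

lemma msum_sum: "msum (\<Sum>k\<in>K. A k) = (\<Sum>k\<in>K. msum (A k))"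
  unfolding msum_def sum_component by (rule swap3)

lemma nrm_scaleR: "nrm (r *\<^sub>R A) = \<bar>r\<bar> * nrm A"
  unfolding nrm_def by (simp add: sum_distrib_left)

lemma msum_scaleR: "msum (r *\<^sub>R A) = of_real r * msum A"
  unfolding msum_def vector_scaleR_component scaleR_conv_of_real[where 'a=complex] sum_distrib_left ..


lemma TCT_diff: "transpose (Tmat x y) ** (A - B) ** Tmat x y =
   transpose (Tmat x y) ** A ** Tmat x y - transpose (Tmat x y) ** B ** Tmat x y"
proof -
  have "(transpose (Tmat x y) ** (A - B) ** Tmat x y)$i$j =
     (transpose (Tmat x y) ** A ** Tmat x y - transpose (Tmat x y) ** B ** Tmat x y)$i$j" for i j
    unfolding TCT_entry vector_minus_component sum_subtractf[symmetric]
    by (intro sum.cong refl) simp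
  thus ?thesis by (simp add: vec_eq_iff)
qed

lemma Lop_diff: "Lop Q (A - B) = Lop Q A - Lop Q B"
  unfolding Lop_def TCT_diff scaleR_diff_right sum_subtractf ..

lemma nrm_Lop:
  fixes Q :: "real^'e^'e"
  assumes st: "stochastic Q"
  shows "nrm (Lop Q C) \<le> nrm C"
proof -
  have Qn: "\<forall>x y. Q$x$y \<ge> 0" "\<forall>x. (\<Sum>y\<in>UNIV. Q$x$y) = 1" using st by (auto simp: stochastic_def)
  have "nrm (Lop Q C) \<le> (\<Sum>x\<in>UNIV. nrm (\<Sum>y\<in>UNIV. (Q$x$y / real CARD('e)) *\<^sub>R (transpose (Tmat x y) ** C ** Tmat x y)))"
    unfolding Lop_def by (rule nrm_sum)
  also have "\<dots> \<le> (\<Sum>x\<in>UNIV. \<Sum>y\<in>UNIV. nrm ((Q$x$y / real CARD('e)) *\<^sub>R (transpose (Tmat x y) ** C ** Tmat x y)))"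
    by (intro sum_mono nrm_sum)
  also have "\<dots> \<le> (\<Sum>x\<in>UNIV. \<Sum>y\<in>UNIV. (Q$x$y / real CARD('e)) * nrm C)"
  proof (intro sum_mono)
    fix x y
    have "\<bar>Q$x$y / real CARD('e)\<bar> = Q$x$y / real CARD('e)" using Qn by simp
    thus "nrm ((Q$x$y / real CARD('e)) *\<^sub>R (transpose (Tmat x y) ** C ** Tmat x y)) \<le> (Q$x$y / real CARD('e)) * nrm C"
      using mult_left_mono[OF nrm_TCT[of x y C], of "Q$x$y / real CARD('e)"] Qn unfolding nrm_scaleR by simp
  qed
  also have "\<dots> = nrm C"
    using Qn by (simp add: sum_divide_distrib[symmetric] sum_distrib_right[symmetric] finite_UNIV_card_ge_0)
  finally show ?thesis .
qed

lemma msum_Lop: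
  fixes Q :: "real^'e^'e"
  assumes st: "stochastic Q"
  shows "msum (Lop Q C) = msum C"
proof -
  have Qn: "\<forall>x. (\<Sum>y\<in>UNIV. Q$x$y) = 1" using st by (auto simp: stochastic_def)
  have "msum (Lop Q C) = (\<Sum>x\<in>UNIV. \<Sum>y\<in>UNIV. of_real (Q$x$y / real CARD('e)) * msum C)"
    unfolding Lop_def msum_sum msum_scaleR msum_TCT ..
  also have "\<dots> = of_real (\<Sum>x\<in>UNIV. \<Sum>y\<in>UNIV. Q$x$y / real CARD('e)) * msum C"
    by (simp add: sum_distrib_right)
  also have "(\<Sum>x\<in>UNIV. \<Sum>y\<in>UNIV. Q$x$y / real CARD('e)) = 1"
    using Qn by (simp add: sum_divide_distrib[symmetric] finite_UNIV_card_ge_0)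
  finally show ?thesis by simp
qed

lemma fsum: fixes x y i :: "'e::finite" shows "(\<Sum>a\<in>UNIV. if fm x y a = i then g a else 0) =
   (if i \<noteq> x then g i else 0) + (if i = y then g x else (0::complex))"
proof -
  have "(\<Sum>a\<in>UNIV. if fm x y a = i then g a else 0) =
     (\<Sum>a\<in>UNIV. (if a = x then (if y = i then g x else 0) else 0) + (if a = i then (if i \<noteq> x then g i else 0) else 0))"
    by (intro sum.cong refl) (auto simp: fm_def)
  also have "\<dots> = (if y = i then g x else 0) + (if i \<noteq> x then g i else 0)"
    unfolding sum.distrib by simp
  finally show ?thesis by (simp add: add.commute eq_commute)
qed

lemma G_formula:
  "(\<Sum>a\<in>UNIV. \<Sum>b\<in>UNIV. if fm x y a = i \<and> fm x y b = j then C$a$b else 0) =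
   (if i \<noteq> x \<and> j \<noteq> x then C$i$j else 0) + (if i \<noteq> x \<and> j = y then C$i$x else 0) +
   (if i = y \<and> j \<noteq> x then C$x$j else 0) + (if i = y \<and> j = y then C$x$x else (0::complex))"
proof -
  have "(\<Sum>a\<in>UNIV. \<Sum>b\<in>UNIV. if fm x y a = i \<and> fm x y b = j then C$a$b else 0) =
     (\<Sum>a\<in>UNIV. if fm x y a = i then (\<Sum>b\<in>UNIV. if fm x y b = j then C$a$b else 0) else 0)"
    by (intro sum.cong refl) auto
  also have "\<dots> = (\<Sum>a\<in>UNIV. if fm x y a = i then (if j \<noteq> x then C$a$j else 0) + (if j = y then C$a$x else 0) else 0)"
    unfolding fsum ..
  also have "\<dots> = (if i \<noteq> x then (if j \<noteq> x then C$i$j else 0) + (if j = y then C$i$x else 0) else 0) +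
      (if i = y then (if j \<noteq> x then C$x$j else 0) + (if j = y then C$x$x else 0) else 0)"
    by (rule fsum)
  also have "\<dots> = (if i \<noteq> x \<and> j \<noteq> x then C$i$j else 0) + (if i \<noteq> x \<and> j = y then C$i$x else 0) +
   (if i = y \<and> j \<noteq> x then C$x$j else 0) + (if i = y \<and> j = y then C$x$x else (0::complex))"
    by auto
  finally show ?thesis .
qed

lemma Lop_entry: fixes Q :: "real^'e^'e" shows "Lop Q C $ i $ j = (\<Sum>x\<in>UNIV. \<Sum>y\<in>UNIV. of_real (Q$x$y / real CARD('e)) *
   ((if i \<noteq> x \<and> j \<noteq> x then C$i$j else 0) + (if i \<noteq> x \<and> j = y then C$i$x else 0) +
   (if i = y \<and> j \<noteq> x then C$x$j else 0) + (if i = y \<and> j = y then C$x$x else 0)))"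
  unfolding Lop_def sum_component vector_scaleR_component TCT_entry G_formula scaleR_conv_of_real[where 'a=complex] ..


lemma sum_except: fixes i :: "'e::finite" shows
  "(\<Sum>x\<in>UNIV. if i \<noteq> x then F x else 0) = (\<Sum>x\<in>UNIV. F x) - (F i :: complex)"
proof -
  have "(\<Sum>x\<in>UNIV. F x) = (\<Sum>x\<in>UNIV. (if i \<noteq> x then F x else 0) + (if x = i then F x else 0))"
    by (intro sum.cong refl) auto
  also have "\<dots> = (\<Sum>x\<in>UNIV. if i \<noteq> x then F x else 0) + F i" by (simp add: sum.distrib)
  finally show ?thesis by simp
qed

lemma count2: fixes i j :: "'e::finite" shows
  "(\<Sum>x\<in>UNIV. if i \<noteq> x \<and> j \<noteq> x then 1 else 0) = (of_nat CARD('e) - 2 + (if i = j then 1 else 0) :: complex)"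
proof -
  have "(\<Sum>x\<in>UNIV. if i \<noteq> x \<and> j \<noteq> x then 1 else 0) =
     (\<Sum>x\<in>UNIV. 1 - (if x = i then 1 else 0) - (if x = j then 1 else 0) + (if x = i then (if i = j then 1 else 0) else (0::complex)))"
    by (intro sum.cong refl) auto
  also have "\<dots> = of_nat CARD('e) - 2 + (if i = j then 1 else 0)"
    by (simp add: sum.distrib sum_subtractf)
  finally show ?thesis .
qed

lemma Lop_closed:
  fixes Q :: "real^'e^'e"
  assumes sym: "\<forall>i j. Q$i$j = Q$j$i" and rows: "\<forall>x. (\<Sum>y\<in>UNIV. Q$x$y) = 1"
  shows "Lop Q C $ i $ j = C$i$j * (of_nat CARD('e) - 2 + (if i = j then 1 else 0)) / of_nat CARD('e)
     + ((C ** cmat Q)$i$j - C$i$i * cmat Q$i$j) / of_nat CARD('e)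
     + ((cmat Q ** C)$i$j - cmat Q$i$j * C$j$j) / of_nat CARD('e)
     + (if i = j then (\<Sum>x\<in>UNIV. cmat Q$i$x * C$x$x) else 0) / of_nat CARD('e)"
proof -
  define Nc where "Nc = (of_nat CARD('e) :: complex)"
  have Nc0: "Nc \<noteq> 0" by (simp add: Nc_def finite_UNIV_card_ge_0)
  define q where "q x y = (of_real (Q$x$y / real CARD('e)) :: complex)" for x y
  have q: "q x y = cmat Q$x$y / Nc" for x y by (simp add: q_def cmat_def Nc_def)
  have qrow: "(\<Sum>y\<in>UNIV. q x y) = 1 / Nc" for x
  proof -
    have "(\<Sum>y\<in>UNIV. q x y) = of_real ((\<Sum>y\<in>UNIV. Q$x$y) / real CARD('e))"
      by (simp add: q_def sum_divide_distrib)
    thus ?thesis using rows by (simp add: Nc_def)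
  qed
  have S1: "(\<Sum>x\<in>UNIV. \<Sum>y\<in>UNIV. q x y * (if i \<noteq> x \<and> j \<noteq> x then C$i$j else 0)) =
      C$i$j * (Nc - 2 + (if i = j then 1 else 0)) / Nc"
  proof -
    have "(\<Sum>x\<in>UNIV. \<Sum>y\<in>UNIV. q x y * (if i \<noteq> x \<and> j \<noteq> x then C$i$j else 0)) =
        (\<Sum>x\<in>UNIV. (C$i$j / Nc) * (if i \<noteq> x \<and> j \<noteq> x then 1 else 0))"
    proof (intro sum.cong refl)
      fix x
      show "(\<Sum>y\<in>UNIV. q x y * (if i \<noteq> x \<and> j \<noteq> x then C$i$j else 0)) =
          (C$i$j / Nc) * (if i \<noteq> x \<and> j \<noteq> x then 1 else 0)"
        using qrow[of x] by (simp add: sum_distrib_right[symmetric])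
    qed
    also have "\<dots> = C$i$j * (Nc - 2 + (if i = j then 1 else 0)) / Nc"
      by (simp only: sum_distrib_left[symmetric] count2 Nc_def) simp
    finally show ?thesis .
  qed
  have S2: "(\<Sum>x\<in>UNIV. \<Sum>y\<in>UNIV. q x y * (if i \<noteq> x \<and> j = y then C$i$x else 0)) =
      ((C ** cmat Q)$i$j - C$i$i * cmat Q$i$j) / Nc"
  proof -
    have "(\<Sum>x\<in>UNIV. \<Sum>y\<in>UNIV. q x y * (if i \<noteq> x \<and> j = y then C$i$x else 0)) =
        (\<Sum>x\<in>UNIV. if i \<noteq> x then C$i$x * cmat Q$x$j / Nc else 0)"
    proof (intro sum.cong refl)
      fix x
      have "(\<Sum>y\<in>UNIV. q x y * (if i \<noteq> x \<and> j = y then C$i$x else 0)) =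
          (\<Sum>y\<in>UNIV. if j = y then (if i \<noteq> x then C$i$x * cmat Q$x$j / Nc else 0) else 0)"
        by (intro sum.cong refl) (auto simp: q)
      also have "\<dots> = (if i \<noteq> x then C$i$x * cmat Q$x$j / Nc else 0)" by simp
      finally show "(\<Sum>y\<in>UNIV. q x y * (if i \<noteq> x \<and> j = y then C$i$x else 0)) =
          (if i \<noteq> x then C$i$x * cmat Q$x$j / Nc else 0)" .
    qed
    also have "\<dots> = (\<Sum>x\<in>UNIV. C$i$x * cmat Q$x$j / Nc) - C$i$i * cmat Q$i$j / Nc"
      by (rule sum_except)
    also have "\<dots> = ((C ** cmat Q)$i$j - C$i$i * cmat Q$i$j) / Nc"
      by (simp add: matrix_matrix_mult_def sum_divide_distrib diff_divide_distrib)
    finally show ?thesis .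
  qed
  have S3: "(\<Sum>x\<in>UNIV. \<Sum>y\<in>UNIV. q x y * (if i = y \<and> j \<noteq> x then C$x$j else 0)) =
      ((cmat Q ** C)$i$j - cmat Q$i$j * C$j$j) / Nc"
  proof -
    have "(\<Sum>x\<in>UNIV. \<Sum>y\<in>UNIV. q x y * (if i = y \<and> j \<noteq> x then C$x$j else 0)) =
        (\<Sum>x\<in>UNIV. if j \<noteq> x then cmat Q$i$x * C$x$j / Nc else 0)"
    proof (intro sum.cong refl)
      fix x
      have "(\<Sum>y\<in>UNIV. q x y * (if i = y \<and> j \<noteq> x then C$x$j else 0)) =
          (\<Sum>y\<in>UNIV. if i = y then (if j \<noteq> x then cmat Q$i$x * C$x$j / Nc else 0) else 0)"
        by (intro sum.cong refl) (auto simp: q cmat_def sym)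
      also have "\<dots> = (if j \<noteq> x then cmat Q$i$x * C$x$j / Nc else 0)" by simp
      finally show "(\<Sum>y\<in>UNIV. q x y * (if i = y \<and> j \<noteq> x then C$x$j else 0)) =
          (if j \<noteq> x then cmat Q$i$x * C$x$j / Nc else 0)" .
    qed
    also have "\<dots> = (\<Sum>x\<in>UNIV. cmat Q$i$x * C$x$j / Nc) - cmat Q$i$j * C$j$j / Nc"
      by (rule sum_except)
    also have "\<dots> = ((cmat Q ** C)$i$j - cmat Q$i$j * C$j$j) / Nc"
      by (simp add: matrix_matrix_mult_def sum_divide_distrib diff_divide_distrib)
    finally show ?thesis .
  qed
  have S4: "(\<Sum>x\<in>UNIV. \<Sum>y\<in>UNIV. q x y * (if i = y \<and> j = y then C$x$x else 0)) =
      (if i = j then (\<Sum>x\<in>UNIV. cmat Q$i$x * C$x$x) else 0) / Nc"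
  proof -
    have "(\<Sum>x\<in>UNIV. \<Sum>y\<in>UNIV. q x y * (if i = y \<and> j = y then C$x$x else 0)) =
        (\<Sum>x\<in>UNIV. if i = j then cmat Q$i$x * C$x$x / Nc else 0)"
    proof (intro sum.cong refl)
      fix x
      have "(\<Sum>y\<in>UNIV. q x y * (if i = y \<and> j = y then C$x$x else 0)) =
          (\<Sum>y\<in>UNIV. if i = y then (if i = j then cmat Q$i$x * C$x$x / Nc else 0) else 0)"
        by (intro sum.cong refl) (auto simp: q cmat_def sym)
      also have "\<dots> = (if i = j then cmat Q$i$x * C$x$x / Nc else 0)" by simp
      finally show "(\<Sum>y\<in>UNIV. q x y * (if i = y \<and> j = y then C$x$x else 0)) =
          (if i = j then cmat Q$i$x * C$x$x / Nc else 0)" .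
    qed
    also have "\<dots> = (if i = j then (\<Sum>x\<in>UNIV. cmat Q$i$x * C$x$x) else 0) / Nc"
      by (simp add: sum_divide_distrib)
    finally show ?thesis .
  qed
  have "Lop Q C $ i $ j = (\<Sum>x\<in>UNIV. \<Sum>y\<in>UNIV. q x y * (if i \<noteq> x \<and> j \<noteq> x then C$i$j else 0))
     + (\<Sum>x\<in>UNIV. \<Sum>y\<in>UNIV. q x y * (if i \<noteq> x \<and> j = y then C$i$x else 0))
     + (\<Sum>x\<in>UNIV. \<Sum>y\<in>UNIV. q x y * (if i = y \<and> j \<noteq> x then C$x$j else 0))
     + (\<Sum>x\<in>UNIV. \<Sum>y\<in>UNIV. q x y * (if i = y \<and> j = y then C$x$x else 0))"
    unfolding Lop_entry q_def[symmetric] distrib_left sum.distrib ..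
  also have "\<dots> = C$i$j * (Nc - 2 + (if i = j then 1 else 0)) / Nc
     + ((C ** cmat Q)$i$j - C$i$i * cmat Q$i$j) / Nc
     + ((cmat Q ** C)$i$j - cmat Q$i$j * C$j$j) / Nc
     + (if i = j then (\<Sum>x\<in>UNIV. cmat Q$i$x * C$x$x) else 0) / Nc"
    unfolding S1 S2 S3 S4 ..
  finally show ?thesis unfolding Nc_def .
qed


definition Emat :: "real^'e^'e \<Rightarrow> complex^'e^'e \<Rightarrow> complex^'e^'e" where
  "Emat Q C = (\<chi> i j. ((if i = j then (C$i$i - trace C / of_nat CARD('e))
      + (\<Sum>x\<in>UNIV. cmat Q$i$x * (C$x$x - trace C / of_nat CARD('e))) else 0)
      - cmat Q$i$j * ((C$i$i - trace C / of_nat CARD('e)) + (C$j$j - trace C / of_nat CARD('e))))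
      / of_nat CARD('e))"

lemma Lop_L0op_E:
  fixes Q :: "real^'e^'e"
  assumes sym: "\<forall>i j. Q$i$j = Q$j$i" and rows: "\<forall>x. (\<Sum>y\<in>UNIV. Q$x$y) = 1"
    and diag0: "\<forall>x. Q$x$x = 0"
  shows "Lop Q C = L0op Q C + Emat Q C"
proof -
  define Nc where "Nc = (of_nat CARD('e) :: complex)"
  have Nc0: "Nc \<noteq> 0" by (simp add: Nc_def finite_UNIV_card_ge_0)
  define t where "t = trace C"
  have crow: "(\<Sum>x\<in>UNIV. cmat Q$i$x) = 1" for i
  proof -
    have "(\<Sum>x\<in>UNIV. cmat Q$i$x) = of_real (\<Sum>x\<in>UNIV. Q$i$x)" by (simp add: cmat_def)
    thus ?thesis using rows by simp
  qed
  have cdiag: "cmat Q$i$i = 0" for i using diag0 by (simp add: cmat_def)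
  have ssum: "(\<Sum>x\<in>UNIV. cmat Q$i$x * (C$x$x - t / Nc)) = (\<Sum>x\<in>UNIV. cmat Q$i$x * C$x$x) - t / Nc" for i
  proof -
    have "(\<Sum>x\<in>UNIV. cmat Q$i$x * (C$x$x - t / Nc)) = (\<Sum>x\<in>UNIV. cmat Q$i$x * C$x$x) - (\<Sum>x\<in>UNIV. cmat Q$i$x) * (t / Nc)"
      unfolding right_diff_distrib sum_subtractf sum_distrib_right ..
    thus ?thesis using crow[of i] by simp
  qed
  have "Lop Q C $ i $ j = (L0op Q C + Emat Q C) $ i $ j" for i j
  proof (cases "i = j")
    case True
    have "Lop Q C $ i $ j = C$i$i * (Nc - 1) / Nc + (C ** cmat Q)$i$i / Nc + (cmat Q ** C)$i$i / Nc
        + (\<Sum>x\<in>UNIV. cmat Q$i$x * C$x$x) / Nc"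
      unfolding Lop_closed[OF sym rows] using True by (simp add: cdiag Nc_def)
    also have "\<dots> = (L0op Q C + Emat Q C) $ i $ j"
      unfolding L0op_def Emat_def Let_def vector_add_component vec_lambda_beta True
        Nc_def[symmetric] t_def[symmetric] ssum
      using Nc0 by (simp add: cdiag mat_def field_simps power2_eq_square)
    finally show ?thesis .
  next
    case False
    have "Lop Q C $ i $ j = C$i$j * (Nc - 2) / Nc + ((C ** cmat Q)$i$j - C$i$i * cmat Q$i$j) / Nc
        + ((cmat Q ** C)$i$j - cmat Q$i$j * C$j$j) / Nc"
      unfolding Lop_closed[OF sym rows] using False by (simp add: Nc_def)
    also have "\<dots> = (L0op Q C + Emat Q C) $ i $ j"
      unfolding L0op_def Emat_def Let_def using False Nc0
      by (simp add: mat_def Nc_def[symmetric] t_def[symmetric] field_simps power2_eq_square)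
    finally show ?thesis .
  qed
  thus ?thesis by (simp add: vec_eq_iff)
qed


lemma crow_sum:
  fixes Q :: "real^'e^'e"
  assumes rows: "\<forall>x. (\<Sum>y\<in>UNIV. Q$x$y) = 1"
  shows "(\<Sum>y\<in>UNIV. cmat Q$x$y) = 1"
proof -
  have "(\<Sum>y\<in>UNIV. cmat Q$x$y) = of_real (\<Sum>y\<in>UNIV. Q$x$y)" by (simp add: cmat_def)
  thus ?thesis using rows by simp
qed

lemma ccol_sum:
  fixes Q :: "real^'e^'e"
  assumes rows: "\<forall>x. (\<Sum>y\<in>UNIV. Q$x$y) = 1" and sym: "\<forall>i j. Q$i$j = Q$j$i"
  shows "(\<Sum>x\<in>UNIV. cmat Q$x$y) = 1"
proof -
  have "(\<Sum>x\<in>UNIV. cmat Q$x$y) = (\<Sum>x\<in>UNIV. cmat Q$y$x)" by (simp add: cmat_def sym)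
  thus ?thesis using crow_sum[OF rows] by simp
qed

lemma msum_mulQ:
  fixes Q :: "real^'e^'e"
  assumes rows: "\<forall>x. (\<Sum>y\<in>UNIV. Q$x$y) = 1"
  shows "msum (C ** cmat Q) = msum C"
proof -
  have "msum (C ** cmat Q) = (\<Sum>i\<in>UNIV. \<Sum>j\<in>UNIV. \<Sum>k\<in>UNIV. C$i$k * cmat Q$k$j)"
    by (simp add: msum_def matrix_matrix_mult_def)
  also have "\<dots> = (\<Sum>i\<in>UNIV. \<Sum>k\<in>UNIV. C$i$k * (\<Sum>j\<in>UNIV. cmat Q$k$j))"
    by (rule sum.cong[OF refl]) (subst sum.swap, simp add: sum_distrib_left)
  also have "\<dots> = msum C" by (simp add: crow_sum[OF rows] msum_def)
  finally show ?thesis .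
qed

lemma msum_Qmul:
  fixes Q :: "real^'e^'e"
  assumes rows: "\<forall>x. (\<Sum>y\<in>UNIV. Q$x$y) = 1" and sym: "\<forall>i j. Q$i$j = Q$j$i"
  shows "msum (cmat Q ** C) = msum C"
proof -
  have "msum (cmat Q ** C) = (\<Sum>i\<in>UNIV. \<Sum>j\<in>UNIV. \<Sum>k\<in>UNIV. cmat Q$i$k * C$k$j)"
    by (simp add: msum_def matrix_matrix_mult_def)
  also have "\<dots> = (\<Sum>k\<in>UNIV. \<Sum>i\<in>UNIV. \<Sum>j\<in>UNIV. cmat Q$i$k * C$k$j)"
    by (rule swap3)
  also have "\<dots> = (\<Sum>k\<in>UNIV. (\<Sum>i\<in>UNIV. cmat Q$i$k) * (\<Sum>j\<in>UNIV. C$k$j))"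
    by (simp add: sum_product)
  also have "\<dots> = msum C" by (simp add: ccol_sum[OF rows sym] msum_def)
  finally show ?thesis .
qed

lemma msum_L0op:
  fixes Q :: "real^'e^'e"
  assumes rows: "\<forall>x. (\<Sum>y\<in>UNIV. Q$x$y) = 1" and sym: "\<forall>i j. Q$i$j = Q$j$i"
  shows "msum (L0op Q C) = msum C"
proof -
  define Nc where "Nc = (of_nat CARD('e) :: complex)"
  have Nc0: "Nc \<noteq> 0" by (simp add: Nc_def finite_UNIV_card_ge_0)
  define t where "t = trace C"
  have mQ: "msum (cmat Q) = Nc" using crow_sum[OF rows] by (simp add: msum_def Nc_def)
  have mI: "msum (mat 1 :: complex^'e^'e) = Nc" by (simp add: msum_def Nc_def mat_def)
  have "msum (L0op Q C) = (Nc - 2) / Nc * msum C + 1 / Nc * (msum (C ** cmat Q) + msum (cmat Q ** C))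
      - 2 * t / Nc^2 * msum (cmat Q) + 2 * t / Nc^2 * msum (mat 1 :: complex^'e^'e)"
    unfolding L0op_def Let_def msum_def Nc_def[symmetric] t_def[symmetric]
    by (simp add: sum.distrib sum_subtractf sum_distrib_left sum_divide_distrib add_divide_distrib)
  also have "\<dots> = msum C"
    unfolding msum_mulQ[OF rows] msum_Qmul[OF rows sym] mQ mI using Nc0
    by (simp add: field_simps power2_eq_square)
  finally show ?thesis .
qed

lemma trace_L0op:
  fixes Q :: "real^'e^'e"
  assumes trQ: "trace Q = 0"
  shows "trace (L0op Q C) = trace C + 2 / of_nat CARD('e) * trace (C ** cmat Q)"
proof -
  define Nc where "Nc = (of_nat CARD('e) :: complex)"
  have Nc0: "Nc \<noteq> 0" by (simp add: Nc_def finite_UNIV_card_ge_0)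
  define t where "t = trace C"
  have tQ: "trace (cmat Q) = 0"
  proof -
    have "trace (cmat Q) = of_real (trace Q)" by (simp add: trace_def cmat_def)
    thus ?thesis using trQ by simp
  qed
  have tI: "trace (mat 1 :: complex^'e^'e) = Nc" by (simp add: trace_I Nc_def)
  have "trace (L0op Q C) = (Nc - 2) / Nc * t + 1 / Nc * (trace (C ** cmat Q) + trace (cmat Q ** C))
      - 2 * t / Nc^2 * trace (cmat Q) + 2 * t / Nc^2 * trace (mat 1 :: complex^'e^'e)"
    unfolding L0op_def Let_def trace_def Nc_def[symmetric] t_def[symmetric]
    by (simp add: sum.distrib sum_subtractf sum_distrib_left t_def trace_def sum_divide_distrib add_divide_distrib)
  also have "\<dots> = t + 2 / Nc * trace (C ** cmat Q)"
    unfolding tQ tI trace_mul_sym[of "cmat Q" C] using Nc0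
    by (simp add: field_simps power2_eq_square)
  finally show ?thesis by (simp add: t_def Nc_def)
qed

lemma trace_Emat:
  fixes Q :: "real^'e^'e"
  assumes rows: "\<forall>x. (\<Sum>y\<in>UNIV. Q$x$y) = 1" and sym: "\<forall>i j. Q$i$j = Q$j$i"
    and diag0: "\<forall>x. Q$x$x = 0"
  shows "trace (Emat Q C) = 0"
proof -
  define Nc where "Nc = (of_nat CARD('e) :: complex)"
  have Nc0: "Nc \<noteq> 0" by (simp add: Nc_def finite_UNIV_card_ge_0)
  define dt where "dt x = C$x$x - trace C / Nc" for x
  have sdt: "(\<Sum>x\<in>UNIV. dt x) = 0"
    using Nc0 by (simp add: dt_def sum_subtractf trace_def Nc_def)
  have cdiag: "cmat Q$i$i = 0" for i using diag0 by (simp add: cmat_def)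
  have "trace (Emat Q C) = (\<Sum>i\<in>UNIV. Emat Q C $ i $ i)" by (simp only: trace_def)
  also have "\<dots> = (\<Sum>i\<in>UNIV. (dt i + (\<Sum>x\<in>UNIV. cmat Q$i$x * dt x)) / Nc)"
    by (simp add: Emat_def cdiag dt_def Nc_def)
  also have "\<dots> = ((\<Sum>i\<in>UNIV. dt i) + (\<Sum>i\<in>UNIV. \<Sum>x\<in>UNIV. cmat Q$i$x * dt x)) / Nc"
    by (simp add: sum_divide_distrib[symmetric] sum.distrib)
  also have "(\<Sum>i\<in>UNIV. \<Sum>x\<in>UNIV. cmat Q$i$x * dt x) = (\<Sum>x\<in>UNIV. \<Sum>i\<in>UNIV. cmat Q$i$x * dt x)"
    by (rule sum.swap)
  also have "\<dots> = (\<Sum>x\<in>UNIV. (\<Sum>i\<in>UNIV. cmat Q$i$x) * dt x)"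
    by (simp add: sum_distrib_right)
  also have "\<dots> = 0" using sdt by (simp add: ccol_sum[OF rows sym])
  finally show ?thesis using sdt by simp
qed



lemma Q_le1:
  fixes Q :: "real^'e^'e"
  assumes st: "stochastic Q"
  shows "Q$x$y \<le> 1" "0 \<le> Q$x$y"
proof -
  have Qn: "\<forall>x y. Q$x$y \<ge> 0" "\<forall>x. (\<Sum>y\<in>UNIV. Q$x$y) = 1" using st by (auto simp: stochastic_def)
  have "Q$x$y \<le> (\<Sum>y\<in>UNIV. Q$x$y)" using Qn by (intro member_le_sum) auto
  thus "Q$x$y \<le> 1" using Qn by simp
  show "0 \<le> Q$x$y" using Qn by simp
qed

lemma nrm_Emat:
  fixes Q :: "real^'e^'e"
  assumes st: "stochastic Q" and sym: "\<forall>i j. Q$i$j = Q$j$i"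
  shows "nrm (Emat Q C) \<le> 4 * dg C / real CARD('e)"
proof -
  define N where "N = real CARD('e)"
  have Npos: "N > 0" by (simp add: N_def finite_UNIV_card_ge_0)
  have Qn: "\<forall>x y. Q$x$y \<ge> 0" "\<forall>x. (\<Sum>y\<in>UNIV. Q$x$y) = 1" using st by (auto simp: stochastic_def)
  have cols: "(\<Sum>x\<in>UNIV. Q$x$y) = 1" for y using Qn(2) sym by (metis (no_types, lifting) sum.cong)
  define dt where "dt x = C$x$x - trace C / of_nat CARD('e)" for x
  define nd where "nd x = norm (dt x)" for x
  have dgnd: "dg C = (\<Sum>x\<in>UNIV. nd x)" by (simp add: dg_def nd_def dt_def)
  have ncQ: "norm (cmat Q$i$j) = Q$i$j" for i j using Qn by (simp add: cmat_def)
  have ent: "norm (Emat Q C $ i $ j) \<le>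
      ((if i = j then nd i + (\<Sum>x\<in>UNIV. Q$i$x * nd x) else 0) + Q$i$j * (nd i + nd j)) / N" for i j
  proof -
    have e: "Emat Q C $ i $ j = ((if i = j then dt i + (\<Sum>x\<in>UNIV. cmat Q$i$x * dt x) else 0)
        - cmat Q$i$j * (dt i + dt j)) / of_nat CARD('e)"
      by (simp add: Emat_def dt_def)
    have a: "norm (if i = j then dt i + (\<Sum>x\<in>UNIV. cmat Q$i$x * dt x) else 0) \<le>
        (if i = j then nd i + (\<Sum>x\<in>UNIV. Q$i$x * nd x) else 0)"
    proof (cases "i = j")
      case True
      have "norm (\<Sum>x\<in>UNIV. cmat Q$i$x * dt x) \<le> (\<Sum>x\<in>UNIV. Q$i$x * nd x)"
        by (rule order_trans[OF norm_sum]) (simp add: norm_mult ncQ nd_def)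
      thus ?thesis using True by (simp add: nd_def order_trans[OF norm_triangle_ineq])
    qed simp
    have b: "norm (cmat Q$i$j * (dt i + dt j)) \<le> Q$i$j * (nd i + nd j)"
      using Qn by (simp add: norm_mult ncQ nd_def mult_left_mono norm_triangle_ineq)
    have "norm (Emat Q C $ i $ j) = norm ((if i = j then dt i + (\<Sum>x\<in>UNIV. cmat Q$i$x * dt x) else 0)
        - cmat Q$i$j * (dt i + dt j)) / N" unfolding e by (simp add: norm_divide N_def)
    also have "\<dots> \<le> (norm (if i = j then dt i + (\<Sum>x\<in>UNIV. cmat Q$i$x * dt x) else 0)
        + norm (cmat Q$i$j * (dt i + dt j))) / N"
      using Npos by (intro divide_right_mono norm_triangle_ineq4) auto
    also have "\<dots> \<le> ((if i = j then nd i + (\<Sum>x\<in>UNIV. Q$i$x * nd x) else 0) + Q$i$j * (nd i + nd j)) / N"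
      using Npos a b by (intro divide_right_mono add_mono) auto
    finally show ?thesis .
  qed
  have "nrm (Emat Q C) \<le> (\<Sum>i\<in>UNIV. \<Sum>j\<in>UNIV.
      ((if i = j then nd i + (\<Sum>x\<in>UNIV. Q$i$x * nd x) else 0) + Q$i$j * (nd i + nd j)) / N)"
    unfolding nrm_def by (intro sum_mono ent)
  also have "\<dots> = ((\<Sum>i\<in>UNIV. nd i) + (\<Sum>i\<in>UNIV. \<Sum>x\<in>UNIV. Q$i$x * nd x)
      + (\<Sum>i\<in>UNIV. \<Sum>j\<in>UNIV. Q$i$j * nd i) + (\<Sum>i\<in>UNIV. \<Sum>j\<in>UNIV. Q$i$j * nd j)) / N"
    by (simp add: sum_divide_distrib[symmetric] sum.distrib distrib_left sum_distrib_left)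
  finally have main: "nrm (Emat Q C) \<le> ((\<Sum>i\<in>UNIV. nd i) + (\<Sum>i\<in>UNIV. \<Sum>x\<in>UNIV. Q$i$x * nd x)
      + (\<Sum>i\<in>UNIV. \<Sum>j\<in>UNIV. Q$i$j * nd i) + (\<Sum>i\<in>UNIV. \<Sum>j\<in>UNIV. Q$i$j * nd j)) / N" .
  have s2: "(\<Sum>i\<in>UNIV. \<Sum>x\<in>UNIV. Q$i$x * nd x) = (\<Sum>x\<in>UNIV. nd x)"
  proof -
    have "(\<Sum>i\<in>UNIV. \<Sum>x\<in>UNIV. Q$i$x * nd x) = (\<Sum>x\<in>UNIV. \<Sum>i\<in>UNIV. Q$i$x * nd x)"
      by (rule sum.swap)
    also have "\<dots> = (\<Sum>x\<in>UNIV. nd x)" by (simp add: sum_distrib_right[symmetric] cols)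
    finally show ?thesis .
  qed
  have s3: "(\<Sum>i\<in>UNIV. \<Sum>j\<in>UNIV. Q$i$j * nd i) = (\<Sum>i\<in>UNIV. nd i)"
    by (simp add: sum_distrib_right[symmetric] Qn)
  have s4: "(\<Sum>i\<in>UNIV. \<Sum>j\<in>UNIV. Q$i$j * nd j) = (\<Sum>x\<in>UNIV. nd x)"
    using s2 by simp
  show ?thesis using main unfolding s2 s3 s4
    by (simp add: dgnd N_def)
qed

lemma trace_Lop:
  fixes Q :: "real^'e^'e"
  assumes st: "stochastic Q" and sym: "\<forall>i j. Q$i$j = Q$j$i" and trQ: "trace Q = 0"
  shows "trace (Lop Q C) = trace C + 2 / of_nat CARD('e) * trace (C ** cmat Q)"
proof -
  have Qn: "\<forall>x y. Q$x$y \<ge> 0" "\<forall>x. (\<Sum>y\<in>UNIV. Q$x$y) = 1" using st by (auto simp: stochastic_def)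
  have diag0: "\<forall>x. Q$x$x = 0"
    using trQ Qn(1) by (simp add: trace_def sum_nonneg_eq_0_iff)
  show ?thesis
    unfolding Lop_L0op_E[OF sym Qn(2) diag0] trace_add trace_L0op[OF trQ] trace_Emat[OF Qn(2) sym diag0]
    by simp
qed

lemma norm_trace_Q:
  fixes Q :: "real^'e^'e"
  assumes st: "stochastic Q"
  shows "norm (trace (D ** cmat Q)) \<le> nrm D"
proof -
  have "norm (trace (D ** cmat Q)) \<le> (\<Sum>i\<in>UNIV. \<Sum>k\<in>UNIV. norm (D$i$k * cmat Q$k$i))"
    unfolding trace_def matrix_matrix_mult_def
    by (simp add: order_trans[OF norm_sum] sum_mono norm_sum)
  also have "\<dots> \<le> nrm D"
    unfolding nrm_def
  proof (intro sum_mono)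
    fix i k
    show "norm (D$i$k * cmat Q$k$i) \<le> norm (D$i$k)"
      using Q_le1[OF st, of k i] by (simp add: norm_mult cmat_def mult_left_le)
  qed
  finally show ?thesis .
qed


lemma pair_prob:
  fixes x y :: "'e::finite" and u :: real
  shows "(\<Sum>B\<in>Pow (UNIV::'e set). if x \<in> B \<and> y \<in> B then u ^ card B * (1 - u) ^ (CARD('e) - card B) else 0)
     = u ^ card {x, y}"
proof -
  define g where "g a = (if a \<in> {x, y} then 0 else 1 - u)" for a
  have "(\<Prod>a\<in>UNIV. u + g a) = (\<Sum>X\<in>Pow UNIV. (\<Prod>a\<in>X. u) * (\<Prod>a\<in>UNIV - X. g a))"
    by (rule prod_add) simp
  also have "\<dots> = (\<Sum>B\<in>Pow (UNIV::'e set). if x \<in> B \<and> y \<in> B then u ^ card B * (1 - u) ^ (CARD('e) - card B) else 0)"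
  proof (intro sum.cong refl)
    fix X :: "'e set"
    show "(\<Prod>a\<in>X. u) * (\<Prod>a\<in>UNIV - X. g a) =
        (if x \<in> X \<and> y \<in> X then u ^ card X * (1 - u) ^ (CARD('e) - card X) else 0)"
    proof (cases "x \<in> X \<and> y \<in> X")
      case True
      have "(\<Prod>a\<in>UNIV - X. g a) = (\<Prod>a\<in>UNIV - X. 1 - u)"
        using True by (intro prod.cong refl) (auto simp: g_def)
      also have "\<dots> = (1 - u) ^ (CARD('e) - card X)"
        by (simp add: card_Diff_subset)
      finally show ?thesis using True by simp
    next
      case False
      then obtain a where "a \<in> UNIV - X" "g a = 0" by (auto simp: g_def)
      hence pz: "(\<Prod>a\<in>UNIV - X. g a) = 0" by (intro prod_zero) auto
      show ?thesis using False by (subst pz) auto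
    qed
  qed
  finally have 1: "(\<Prod>a\<in>UNIV. u + g a) = (\<Sum>B\<in>Pow (UNIV::'e set). if x \<in> B \<and> y \<in> B then u ^ card B * (1 - u) ^ (CARD('e) - card B) else 0)" .
  have "(\<Prod>a\<in>UNIV. u + g a) = (\<Prod>a\<in>UNIV. if a \<in> {x, y} then u else 1)"
    by (intro prod.cong refl) (auto simp: g_def)
  also have "\<dots> = (\<Prod>a\<in>UNIV \<inter> {a. a \<in> {x, y}}. u) * (\<Prod>a\<in>UNIV \<inter> - {a. a \<in> {x, y}}. 1)"
    by (rule prod.If_cases) simp
  also have "\<dots> = u ^ card {x, y}"
  proof -
    have e: "UNIV \<inter> {a. a \<in> {x, y}} = {x, y}" by auto
    show ?thesis unfolding e by simp
  qed
  finally show ?thesis using 1 by simp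
qed

lemma S_beta_formula:
  fixes C :: "complex^'e^'e"
  shows "S_beta u C = of_real (u^2) * msum C + of_real (u - u^2) * trace C"
proof -
  define w where "w B = complex_of_real (u ^ card B * (1 - u) ^ (CARD('e) - card B))" for B :: "'e set"
  have inB: "(\<Sum>x\<in>B. f x) = (\<Sum>x\<in>UNIV. if x \<in> B then f x else 0)" for B :: "'e set" and f :: "'e \<Rightarrow> complex"
    by (simp add: sum.If_cases)
  have "S_beta u C = (\<Sum>B\<in>Pow UNIV. \<Sum>x\<in>UNIV. \<Sum>y\<in>UNIV. w B * (if x \<in> B \<and> y \<in> B then C$x$y else 0))"
    unfolding S_beta_def w_def[symmetric]
  proof (intro sum.cong refl)
    fix B :: "'e set"
    have "(\<Sum>x\<in>B. \<Sum>y\<in>B. C$x$y) = (\<Sum>x\<in>UNIV. \<Sum>y\<in>UNIV. if x \<in> B \<and> y \<in> B then C$x$y else 0)"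
      unfolding inB[where B=B] by (intro sum.cong refl) auto
    thus "w B * (\<Sum>x\<in>B. \<Sum>y\<in>B. C$x$y) = (\<Sum>x\<in>UNIV. \<Sum>y\<in>UNIV. w B * (if x \<in> B \<and> y \<in> B then C$x$y else 0))"
      by (simp add: sum_distrib_left)
  qed
  also have "\<dots> = (\<Sum>x\<in>UNIV. \<Sum>y\<in>UNIV. \<Sum>B\<in>Pow UNIV. w B * (if x \<in> B \<and> y \<in> B then C$x$y else 0))"
    by (rule swap3[symmetric])
  also have "\<dots> = (\<Sum>x\<in>UNIV. \<Sum>y\<in>UNIV. C$x$y * of_real (u ^ card {x, y}))"
  proof (intro sum.cong refl)
    fix x y
    have "(\<Sum>B\<in>Pow UNIV. w B * (if x \<in> B \<and> y \<in> B then C$x$y else 0)) =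
       C$x$y * of_real (\<Sum>B\<in>Pow (UNIV::'e set). if x \<in> B \<and> y \<in> B then u ^ card B * (1 - u) ^ (CARD('e) - card B) else 0)"
    proof -
      have "(\<Sum>B\<in>Pow UNIV. w B * (if x \<in> B \<and> y \<in> B then C$x$y else 0)) =
         (\<Sum>B\<in>Pow UNIV. C$x$y * of_real (if x \<in> B \<and> y \<in> B then u ^ card B * (1 - u) ^ (CARD('e) - card B) else 0))"
        by (intro sum.cong refl) (simp add: w_def)
      also have "\<dots> = C$x$y * of_real (\<Sum>B\<in>Pow (UNIV::'e set). if x \<in> B \<and> y \<in> B then u ^ card B * (1 - u) ^ (CARD('e) - card B) else 0)"
        unfolding of_real_sum sum_distrib_left ..
      finally show ?thesis .
    qed
    thus "(\<Sum>B\<in>Pow UNIV. w B * (if x \<in> B \<and> y \<in> B then C$x$y else 0)) = C$x$y * of_real (u ^ card {x, y})"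
      unfolding pair_prob .
  qed
  also have "\<dots> = (\<Sum>x\<in>UNIV. \<Sum>y\<in>UNIV. of_real (u^2) * C$x$y + (if x = y then of_real (u - u^2) * C$x$x else 0))"
    by (intro sum.cong refl) (auto simp: power2_eq_square algebra_simps)
  also have "\<dots> = of_real (u^2) * msum C + of_real (u - u^2) * trace C"
    by (simp add: sum.distrib sum_distrib_left msum_def trace_def)
  finally show ?thesis .
qed



primrec coef :: "real^'e^'e \<Rightarrow> nat \<Rightarrow> nat \<Rightarrow> complex" where
  "coef Q 0 s = 0"
| "coef Q (Suc k) s = (of_nat CARD('e) - 2) / of_nat CARD('e) * coef Q k s
     + (if s = 0 then 0 else 2 / of_nat CARD('e) * coef Q k (s - 1))
     + 2 * trace ((L0op Q ^^ k) Jmat) / (of_nat CARD('e))^2 * ((if s = 0 then 1 else 0) - (if s = 1 then 1 else 0))"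

definition Rm :: "real^'e^'e \<Rightarrow> nat \<Rightarrow> complex^'e^'e" where
  "Rm Q k = (\<chi> i j. \<Sum>s\<le>k. coef Q k s * cmat (mpow Q s) $ i $ j)"

lemma coef_zero: "k < s \<Longrightarrow> coef Q k s = 0"
proof (induction k arbitrary: s)
  case 0 then show ?case by simp
next
  case (Suc k)
  then show ?case by simp
qed

lemma cmat_mult: "cmat (A ** B) = cmat A ** cmat B"
  by (simp add: cmat_def matrix_matrix_mult_def vec_eq_iff)

lemma M_Suc: "cmat (mpow Q s) ** cmat Q = cmat (mpow Q (Suc s))"
  "cmat Q ** cmat (mpow Q s) = cmat (mpow Q (Suc s))"
  by (simp only: cmat_mult[symmetric] mpow_Suc, simp only: cmat_mult[symmetric] mpow_Suc')

lemma Jmat_entry: "(Jmat :: complex^'e^'e) $ i $ j = 1 / of_nat CARD('e)"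
  by (simp add: Jmat_def)

lemma add_mult_entry: "((A + B) ** C) $ i $ j = (A ** C) $ i $ j + (B ** C) $ i $ j"
  by (simp add: matrix_matrix_mult_def sum.distrib distrib_right)

lemma mult_add_entry: "(C ** (A + B)) $ i $ j = (C ** A) $ i $ j + (C ** B) $ i $ j"
  by (simp add: matrix_matrix_mult_def sum.distrib distrib_left)

lemma J_mulQ:
  fixes Q :: "real^'e^'e"
  assumes rows: "\<forall>x. (\<Sum>y\<in>UNIV. Q$x$y) = 1" and sym: "\<forall>i j. Q$i$j = Q$j$i"
  shows "(Jmat ** cmat Q) $ i $ j = 1 / of_nat CARD('e)" "(cmat Q ** Jmat) $ i $ j = 1 / of_nat CARD('e)"
proof -
  have "(Jmat ** cmat Q) $ i $ j = 1 / of_nat CARD('e) * (\<Sum>l\<in>UNIV. cmat Q $ l $ j)"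
    by (simp add: matrix_matrix_mult_def Jmat_entry sum_distrib_left)
  thus "(Jmat ** cmat Q) $ i $ j = 1 / of_nat CARD('e)" by (simp add: ccol_sum[OF rows sym])
  have "(cmat Q ** Jmat) $ i $ j = (\<Sum>l\<in>UNIV. cmat Q $ i $ l) * (1 / of_nat CARD('e))"
    by (simp add: matrix_matrix_mult_def Jmat_entry sum_distrib_right sum_divide_distrib)
  thus "(cmat Q ** Jmat) $ i $ j = 1 / of_nat CARD('e)" by (simp add: crow_sum[OF rows])
qed

lemma R_mulQ:
  fixes Q :: "real^'e^'e"
  shows "(Rm Q k ** cmat Q) $ i $ j = (\<Sum>s\<le>k. coef Q k s * cmat (mpow Q (Suc s)) $ i $ j)"
    "(cmat Q ** Rm Q k) $ i $ j = (\<Sum>s\<le>k. coef Q k s * cmat (mpow Q (Suc s)) $ i $ j)"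
proof -
  have "(Rm Q k ** cmat Q) $ i $ j = (\<Sum>l\<in>UNIV. \<Sum>s\<le>k. coef Q k s * cmat (mpow Q s) $ i $ l * cmat Q $ l $ j)"
    by (simp add: Rm_def matrix_matrix_mult_def sum_distrib_right)
  also have "\<dots> = (\<Sum>s\<le>k. coef Q k s * (\<Sum>l\<in>UNIV. cmat (mpow Q s) $ i $ l * cmat Q $ l $ j))"
    by (subst sum.swap) (simp add: sum_distrib_left mult_ac)
  also have "\<dots> = (\<Sum>s\<le>k. coef Q k s * cmat (mpow Q (Suc s)) $ i $ j)"
    by (simp add: M_Suc(1)[symmetric] matrix_matrix_mult_def)
  finally show "(Rm Q k ** cmat Q) $ i $ j = (\<Sum>s\<le>k. coef Q k s * cmat (mpow Q (Suc s)) $ i $ j)" .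
  have "(cmat Q ** Rm Q k) $ i $ j = (\<Sum>l\<in>UNIV. \<Sum>s\<le>k. cmat Q $ i $ l * (coef Q k s * cmat (mpow Q s) $ l $ j))"
    by (simp add: Rm_def matrix_matrix_mult_def sum_distrib_left)
  also have "\<dots> = (\<Sum>s\<le>k. coef Q k s * (\<Sum>l\<in>UNIV. cmat Q $ i $ l * cmat (mpow Q s) $ l $ j))"
    by (subst sum.swap) (simp add: sum_distrib_left mult_ac)
  also have "\<dots> = (\<Sum>s\<le>k. coef Q k s * cmat (mpow Q (Suc s)) $ i $ j)"
    by (simp add: M_Suc(2)[symmetric] matrix_matrix_mult_def)
  finally show "(cmat Q ** Rm Q k) $ i $ j = (\<Sum>s\<le>k. coef Q k s * cmat (mpow Q (Suc s)) $ i $ j)" .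
qed

lemma Y_repr:
  fixes Q :: "real^'e^'e"
  assumes rows: "\<forall>x. (\<Sum>y\<in>UNIV. Q$x$y) = 1" and sym: "\<forall>i j. Q$i$j = Q$j$i"
  shows "(L0op Q ^^ k) Jmat = Jmat + Rm Q k"
proof (induction k)
  case 0
  show ?case by (simp add: Rm_def vec_eq_iff)
next
  case (Suc k)
  define Nc where "Nc = (of_nat CARD('e) :: complex)"
  have Nc0: "Nc \<noteq> 0" by (simp add: Nc_def finite_UNIV_card_ge_0)
  define Y where "Y = (L0op Q ^^ k) Jmat"
  define t where "t = trace Y"
  define c where "c = coef Q k"
  have "(L0op Q ^^ Suc k) Jmat $ i $ j = (Jmat + Rm Q (Suc k)) $ i $ j" for i j
  proof -
    define A where "A s = cmat (mpow Q s) $ i $ j" for s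
    define S0 where "S0 = (\<Sum>s\<le>k. c s * A s)"
    define S1 where "S1 = (\<Sum>s\<le>k. c s * A (Suc s))"
    have Yij: "Y $ i $ j = 1 / Nc + S0"
      using Suc by (simp add: Y_def Rm_def Jmat_entry Nc_def S0_def A_def c_def)
    have YQ: "(Y ** cmat Q) $ i $ j = 1 / Nc + S1"
      unfolding Y_def Suc add_mult_entry J_mulQ[OF rows sym] R_mulQ
      by (simp add: Nc_def S1_def A_def c_def)
    have QY: "(cmat Q ** Y) $ i $ j = 1 / Nc + S1"
      unfolding Y_def Suc mult_add_entry J_mulQ[OF rows sym] R_mulQ
      by (simp add: Nc_def S1_def A_def c_def)
    have A0: "A 0 = (mat 1 :: complex^'e^'e) $ i $ j" by (simp add: A_def mpow_0 cmat_def mat_def)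
    have A1: "A 1 = cmat Q $ i $ j" by (simp add: A_def mpow_Suc mpow_0)
    have lhs: "(L0op Q ^^ Suc k) Jmat $ i $ j = (Nc - 2) / Nc * (1 / Nc + S0) + 1 / Nc * (2 / Nc + 2 * S1)
        - 2 * t / Nc^2 * A 1 + 2 * t / Nc^2 * A 0"
      unfolding A0 A1 using Yij YQ QY
      by (simp add: L0op_def Let_def Y_def[symmetric] t_def[symmetric] Nc_def[symmetric])
    have cS: "coef Q (Suc k) s = (Nc - 2) / Nc * c s + (if s = 0 then 0 else 2 / Nc * c (s - 1))
        + 2 * t / Nc^2 * ((if s = 0 then 1 else 0) - (if s = 1 then 1 else 0))" for s
      by (simp add: c_def t_def Y_def Nc_def)
    have sum1: "(\<Sum>s\<le>Suc k. c s * A s) = S0"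
      using coef_zero[of k "Suc k" Q] by (simp add: S0_def c_def)
    have sum2: "(\<Sum>s\<le>Suc k. (if s = 0 then 0 else 2 / Nc * c (s - 1)) * A s) = 2 / Nc * S1"
      unfolding sum.atMost_Suc_shift by (simp add: S1_def sum_distrib_left mult_ac)
    have sum3: "(\<Sum>s\<le>Suc k. ((if s = 0 then 1 else 0) - (if s = 1 then 1 else 0)) * A s) = A 0 - A 1"
    proof -
      have "(\<Sum>s\<le>Suc k. ((if s = 0 then 1 else 0) - (if s = 1 then 1 else 0)) * A s) =
          (\<Sum>s\<le>Suc k. (if s = 0 then A s else 0)) - (\<Sum>s\<le>Suc k. (if s = 1 then A s else 0))"
        unfolding sum_subtractf[symmetric] by (intro sum.cong refl) auto
      also have "\<dots> = A 0 - A 1" by (simp add: sum.delta)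
      finally show ?thesis .
    qed
    have rhs: "(Jmat + Rm Q (Suc k)) $ i $ j = 1 / Nc + ((Nc - 2) / Nc * S0 + 2 / Nc * S1 + 2 * t / Nc^2 * (A 0 - A 1))"
    proof -
      have "(Jmat + Rm Q (Suc k)) $ i $ j = 1 / Nc + (\<Sum>s\<le>Suc k. coef Q (Suc k) s * A s)"
        by (simp add: Rm_def Jmat_entry Nc_def A_def)
      also have "(\<Sum>s\<le>Suc k. coef Q (Suc k) s * A s) =
          (Nc - 2) / Nc * (\<Sum>s\<le>Suc k. c s * A s)
          + (\<Sum>s\<le>Suc k. (if s = 0 then 0 else 2 / Nc * c (s - 1)) * A s)
          + 2 * t / Nc^2 * (\<Sum>s\<le>Suc k. ((if s = 0 then 1 else 0) - (if s = 1 then 1 else 0)) * A s)"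
        unfolding cS distrib_right sum.distrib sum_distrib_left by (simp add: mult_ac)
      finally show ?thesis unfolding sum1 sum2 sum3 .
    qed
    show ?thesis unfolding lhs rhs using Nc0 by (simp add: field_simps power2_eq_square)
  qed
  thus ?case by (simp add: vec_eq_iff)
qed



definition acoef :: "real^'e^'e \<Rightarrow> nat \<Rightarrow> real" where
  "acoef Q k = (\<Sum>s\<le>k. norm (coef Q k s))"

lemma trace_Rm: "trace (Rm Q k) = (\<Sum>s\<le>k. coef Q k s * trace (cmat (mpow Q s)))"
  unfolding Rm_def trace_def by (simp add: sum_distrib_left) (rule sum.swap)

lemma trace_J: "trace (Jmat :: complex^'e^'e) = 1"
  by (simp add: trace_def Jmat_entry)

lemma norm_trace_M:
  fixes Q :: "real^'e^'e"
  assumes st: "stochastic Q"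
  shows "norm (trace (cmat (mpow Q s))) \<le> real CARD('e)"
proof -
  have "norm (trace (cmat (mpow Q s))) \<le> (\<Sum>i\<in>UNIV. norm (cmat (mpow Q s) $ i $ i))"
    unfolding trace_def by (rule norm_sum)
  also have "\<dots> \<le> (\<Sum>i\<in>(UNIV::'e set). 1)"
    by (intro sum_mono) (simp add: cmat_def stoch_mpow_le1[OF st])
  finally show ?thesis by simp
qed

lemma trace_Y_bound:
  fixes Q :: "real^'e^'e"
  assumes st: "stochastic Q" and sym: "\<forall>i j. Q$i$j = Q$j$i"
  shows "norm (trace ((L0op Q ^^ k) Jmat)) \<le> 1 + real CARD('e) * acoef Q k"
proof -
  have rows: "\<forall>x. (\<Sum>y\<in>UNIV. Q$x$y) = 1" using st by (auto simp: stochastic_def)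
  have "trace ((L0op Q ^^ k) Jmat) = 1 + (\<Sum>s\<le>k. coef Q k s * trace (cmat (mpow Q s)))"
    unfolding Y_repr[OF rows sym] trace_add trace_J trace_Rm ..
  hence "norm (trace ((L0op Q ^^ k) Jmat)) \<le> 1 + norm (\<Sum>s\<le>k. coef Q k s * trace (cmat (mpow Q s)))"
    by (metis norm_one norm_triangle_ineq)
  also have "norm (\<Sum>s\<le>k. coef Q k s * trace (cmat (mpow Q s))) \<le> (\<Sum>s\<le>k. norm (coef Q k s) * real CARD('e))"
    by (rule order_trans[OF norm_sum], intro sum_mono)
       (simp add: norm_mult mult_left_mono norm_trace_M[OF st])
  also have "\<dots> = real CARD('e) * acoef Q k" by (simp add: acoef_def sum_distrib_left mult_ac)
  finally show ?thesis by simp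
qed

lemma acoef_bound:
  fixes Q :: "real^'e^'e"
  assumes st: "stochastic Q" and sym: "\<forall>i j. Q$i$j = Q$j$i" and N2: "CARD('e) \<ge> 2"
  shows "acoef Q k \<le> ((1 + 4 / real CARD('e)) ^ k - 1) / real CARD('e)"
proof (induction k)
  case 0
  show ?case by (simp add: acoef_def)
next
  case (Suc k)
  define N where "N = real CARD('e)"
  have N2': "N \<ge> 2" using N2 by (simp add: N_def)
  define Nc where "Nc = (of_nat CARD('e) :: complex)"
  have nNc: "norm Nc = N" by (simp add: Nc_def N_def)
  define c where "c = coef Q k"
  define t where "t = trace ((L0op Q ^^ k) Jmat)"
  have tb: "norm t \<le> 1 + N * acoef Q k" using trace_Y_bound[OF st sym, of k] by (simp add: t_def N_def)
  have e: "Nc - 2 = complex_of_real (N - 2)" by (simp add: Nc_def N_def)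
  have n0: "norm (Nc - 2) = N - 2" unfolding e norm_of_real using N2' by simp
  have n1: "norm ((Nc - 2) / Nc) = (N - 2) / N" using n0 by (simp add: norm_divide nNc)
  define w where "w s = (if s = 0 then 1 else 0) + (if s = 1 then 1 else (0::real))" for s :: nat
  have pt: "norm (coef Q (Suc k) s) \<le> (N - 2) / N * norm (c s)
      + (if s = 0 then 0 else 2 / N * norm (c (s - 1)))
      + 2 * norm t / N^2 * w s" for s
  proof -
    have "coef Q (Suc k) s = (Nc - 2) / Nc * c s + (if s = 0 then 0 else 2 / Nc * c (s - 1))
        + 2 * t / Nc^2 * ((if s = 0 then 1 else 0) - (if s = 1 then 1 else 0))"
      by (simp add: c_def t_def Nc_def)
    hence "norm (coef Q (Suc k) s) \<le> norm ((Nc - 2) / Nc * c s) + norm (if s = 0 then 0 else 2 / Nc * c (s - 1))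
        + norm (2 * t / Nc^2 * ((if s = 0 then 1 else 0) - (if s = 1 then 1 else 0)))"
      by (metis (no_types, lifting) norm_triangle_le norm_triangle_ineq add_mono order_refl)
    also have "\<dots> = (N - 2) / N * norm (c s) + (if s = 0 then 0 else 2 / N * norm (c (s - 1)))
        + 2 * norm t / N^2 * w s"
      by (simp add: norm_mult n0 n1 norm_divide nNc norm_power w_def)
    finally show ?thesis .
  qed
  have "acoef Q (Suc k) \<le> (\<Sum>s\<le>Suc k. (N - 2) / N * norm (c s)
      + (if s = 0 then 0 else 2 / N * norm (c (s - 1)))
      + 2 * norm t / N^2 * w s)"
    unfolding acoef_def by (intro sum_mono pt)
  also have "\<dots> = (N - 2) / N * (\<Sum>s\<le>Suc k. norm (c s))
      + (\<Sum>s\<le>Suc k. (if s = 0 then 0 else 2 / N * norm (c (s - 1))))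
      + 2 * norm t / N^2 * (\<Sum>s\<le>Suc k. w s)"
    by (simp only: sum.distrib sum_distrib_left)
  also have "(\<Sum>s\<le>Suc k. norm (c s)) = acoef Q k"
    using coef_zero[of k "Suc k" Q] by (simp add: acoef_def c_def)
  also have "(\<Sum>s\<le>Suc k. (if s = 0 then 0 else 2 / N * norm (c (s - 1)))) = 2 / N * acoef Q k"
    unfolding sum.atMost_Suc_shift by (simp add: acoef_def c_def sum_distrib_left)
  also have "(\<Sum>s\<le>Suc k. w s) = 2"
    by (simp add: sum.distrib w_def)
  finally have step: "acoef Q (Suc k) \<le> (N - 2) / N * acoef Q k + 2 / N * acoef Q k + 2 * norm t / N^2 * 2" .
  have Npos: "N > 0" using N2' by simp
  have a0: "acoef Q k \<ge> 0" by (simp add: acoef_def sum_nonneg)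
  have "acoef Q (Suc k) \<le> acoef Q k * (1 + 4 / N) + 4 / N^2"
  proof -
    have "(N - 2) / N * acoef Q k + 2 / N * acoef Q k = acoef Q k" using Npos by (simp add: field_simps)
    moreover have "2 * norm t / N^2 * 2 \<le> 4 * (1 + N * acoef Q k) / N^2"
      using tb Npos by (simp add: divide_right_mono)
    moreover have "4 * (1 + N * acoef Q k) / N^2 = acoef Q k * (4 / N) + 4 / N^2"
      using Npos by (simp add: field_simps power2_eq_square)
    ultimately show ?thesis using step by (simp add: algebra_simps)
  qed
  also have "\<dots> \<le> ((1 + 4 / N) ^ k - 1) / N * (1 + 4 / N) + 4 / N^2"
  proof -
    have "acoef Q k * (1 + 4 / N) \<le> ((1 + 4 / N) ^ k - 1) / N * (1 + 4 / N)"
      using Npos Suc.IH by (intro mult_right_mono) (auto simp: N_def)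
    thus ?thesis by simp
  qed
  also have "\<dots> = ((1 + 4 / N) ^ Suc k - 1) / N"
    using Npos by (simp add: field_simps power2_eq_square)
  finally show ?case by (simp add: N_def)
qed



lemma nrm_add: "nrm (A + B) \<le> nrm A + nrm B"
  unfolding nrm_def by (simp add: sum.distrib[symmetric] sum_mono norm_triangle_ineq)

lemma nrm_nonneg: "nrm A \<ge> 0"
  unfolding nrm_def by (simp add: sum_nonneg)

lemma Delta_nonneg:
  fixes Q :: "real^'e^'e"
  assumes st: "stochastic Q" and sym: "\<forall>i j. Q$i$j = Q$j$i" and g0: "0 \<le> \<gamma>"
  shows "Delta Q \<gamma> \<ge> 0"
proof -
  have "0 \<le> dg (cmat (mpow Q 0))" by (simp add: dg_def sum_nonneg)
  also have "\<dots> \<le> 2 * real CARD('e) * Delta Q \<gamma>" by (rule dg_mpow_Delta[OF st sym g0])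
  finally show ?thesis by (simp add: zero_le_mult_iff finite_UNIV_card_ge_0)
qed

lemma dg_Y:
  fixes Q :: "real^'e^'e"
  assumes st: "stochastic Q" and sym: "\<forall>i j. Q$i$j = Q$j$i" and g0: "0 \<le> \<gamma>"
  shows "dg ((L0op Q ^^ k) Jmat) \<le> 2 * real CARD('e) * Delta Q \<gamma> * acoef Q k"
proof -
  have rows: "\<forall>x. (\<Sum>y\<in>UNIV. Q$x$y) = 1" using st by (auto simp: stochastic_def)
  define Nc where "Nc = (of_nat CARD('e) :: complex)"
  have Nc0: "Nc \<noteq> 0" by (simp add: Nc_def finite_UNIV_card_ge_0)
  define Y where "Y = (L0op Q ^^ k) Jmat"
  define c where "c = coef Q k"
  define M where "M s = cmat (mpow Q s)" for s
  have trY: "trace Y = 1 + (\<Sum>s\<le>k. c s * trace (M s))"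
    unfolding Y_def Y_repr[OF rows sym] trace_add trace_J trace_Rm c_def M_def ..
  have diagY: "Y $ y $ y - trace Y / Nc = (\<Sum>s\<le>k. c s * (M s $ y $ y - trace (M s) / Nc))" for y
  proof -
    have "Y $ y $ y = 1 / Nc + (\<Sum>s\<le>k. c s * M s $ y $ y)"
      unfolding Y_def Y_repr[OF rows sym] by (simp add: Rm_def Jmat_entry Nc_def c_def M_def)
    thus ?thesis unfolding trY using Nc0
      by (simp add: right_diff_distrib sum_subtractf sum_divide_distrib add_divide_distrib mult_ac)
  qed
  have "dg Y = (\<Sum>y\<in>UNIV. norm (\<Sum>s\<le>k. c s * (M s $ y $ y - trace (M s) / Nc)))"
    unfolding dg_def Nc_def[symmetric] diagY ..
  also have "\<dots> \<le> (\<Sum>y\<in>UNIV. \<Sum>s\<le>k. norm (c s) * norm (M s $ y $ y - trace (M s) / Nc))"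
    by (intro sum_mono order_trans[OF norm_sum]) (simp add: norm_mult)
  also have "\<dots> = (\<Sum>s\<le>k. norm (c s) * dg (M s))"
    by (subst sum.swap) (simp add: dg_def sum_distrib_left Nc_def)
  also have "\<dots> \<le> (\<Sum>s\<le>k. norm (c s) * (2 * real CARD('e) * Delta Q \<gamma>))"
    by (intro sum_mono mult_left_mono) (auto simp: M_def dg_mpow_Delta[OF st sym g0])
  also have "\<dots> = 2 * real CARD('e) * Delta Q \<gamma> * acoef Q k"
    by (simp add: acoef_def c_def sum_distrib_left mult_ac)
  finally show ?thesis by (simp add: Y_def)
qed

lemma main_D:
  fixes Q :: "real^'e^'e"
  assumes st: "stochastic Q" and sym: "\<forall>i j. Q$i$j = Q$j$i" and g0: "0 \<le> \<gamma>"
    and trQ: "trace Q = 0" and N2: "CARD('e) \<ge> 2"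
  shows "nrm ((Lop Q ^^ n) Jmat - (L0op Q ^^ n) Jmat) \<le> 2 * Delta Q \<gamma> * (1 + 4 / real CARD('e)) ^ n"
proof (induction n)
  case 0
  show ?case using Delta_nonneg[OF st sym g0] by (simp add: nrm_def)
next
  case (Suc n)
  have Qn: "\<forall>x y. Q$x$y \<ge> 0" "\<forall>x. (\<Sum>y\<in>UNIV. Q$x$y) = 1" using st by (auto simp: stochastic_def)
  have diag0: "\<forall>x. Q$x$x = 0"
    using trQ Qn(1) by (simp add: trace_def sum_nonneg_eq_0_iff)
  define N where "N = real CARD('e)"
  have Npos: "N > 0" by (simp add: N_def finite_UNIV_card_ge_0)
  define X where "X = (Lop Q ^^ n) Jmat"
  define Y where "Y = (L0op Q ^^ n) Jmat"
  define Dl where "Dl = Delta Q \<gamma>"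
  have Dl0: "Dl \<ge> 0" using Delta_nonneg[OF st sym g0] by (simp add: Dl_def)
  have eq: "(Lop Q ^^ Suc n) Jmat - (L0op Q ^^ Suc n) Jmat = Lop Q (X - Y) + Emat Q Y"
    by (simp add: X_def Y_def Lop_diff Lop_L0op_E[OF sym Qn(2) diag0])
  have dgY: "dg Y \<le> 2 * Dl * (1 + 4 / N) ^ n"
  proof -
    have "dg Y \<le> 2 * N * Dl * acoef Q n" using dg_Y[OF st sym g0, of n] by (simp add: Y_def N_def Dl_def)
    also have "\<dots> \<le> 2 * N * Dl * (((1 + 4 / N) ^ n - 1) / N)"
      using acoef_bound[OF st sym N2, of n] Dl0 Npos by (intro mult_left_mono) (auto simp: N_def)
    also have "\<dots> = 2 * Dl * ((1 + 4 / N) ^ n - 1)" using Npos by simp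
    also have "\<dots> \<le> 2 * Dl * (1 + 4 / N) ^ n" using Dl0 by (simp add: mult_left_mono)
    finally show ?thesis .
  qed
  have "nrm ((Lop Q ^^ Suc n) Jmat - (L0op Q ^^ Suc n) Jmat) \<le> nrm (Lop Q (X - Y)) + nrm (Emat Q Y)"
    unfolding eq by (rule nrm_add)
  also have "\<dots> \<le> nrm (X - Y) + 4 * dg Y / N"
    using nrm_Lop[OF st, of "X - Y"] nrm_Emat[OF st sym, of Y] by (simp add: N_def)
  also have "\<dots> \<le> 2 * Dl * (1 + 4 / N) ^ n + 4 * (2 * Dl * (1 + 4 / N) ^ n) / N"
    using Suc.IH dgY Npos by (intro add_mono divide_right_mono mult_left_mono) (auto simp: X_def Y_def N_def Dl_def)
  also have "\<dots> = 2 * Dl * (1 + 4 / N) ^ Suc n"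
    using Npos by (simp add: field_simps)
  finally show ?case by (simp add: N_def Dl_def)
qed



lemma trace_mul_sub: "trace (A ** C) - trace (B ** C) = trace ((A - B) ** (C :: complex^'e^'e))"
  by (simp add: trace_def matrix_matrix_mult_def sum_subtractf left_diff_distrib)

theorem lemma4p9:
  fixes Q :: "real^'e^'e" and lam u \<gamma> :: real and m :: nat
  assumes "CARD('e) > 8"
    and "stochastic Q" and "irreducible_mat Q"
    and "\<forall>x y. Q$x$y = Q$y$x" and "trace Q = 0"
    and "lam > 0" and "0 < u" and "u < 1" and "0 \<le> \<gamma>" and "\<gamma> \<le> 1"
  shows "norm (complex_of_real (lam * (real CARD('e))^2 / (2 * u * (1 - u) * (real CARD('e) + lam)))
      * (\<Sum>n = 0..m * CARD('e). complex_of_real ((real CARD('e) / (real CARD('e) + lam)) ^ n) *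
          ((S_beta u ((Lop Q ^^ (n+1)) Jmat) / of_nat CARD('e) - S_beta u ((Lop Q ^^ n) Jmat) / of_nat CARD('e))
         - (S_beta u ((L0op Q ^^ (n+1)) Jmat) / of_nat CARD('e) - S_beta u ((L0op Q ^^ n) Jmat) / of_nat CARD('e)))))
    \<le> 40 * Delta Q \<gamma> / (1 - u) * (1 + 6 / real CARD('e)) ^ (m * CARD('e))"
proof -
  note card8 = assms(1) and st = assms(2) and sym = assms(4) and trQ = assms(5)
    and lam0 = assms(6) and u0 = assms(7) and u1 = assms(8) and g0 = assms(9)
  have Qn: "\<forall>x y. Q$x$y \<ge> 0" "\<forall>x. (\<Sum>y\<in>UNIV. Q$x$y) = 1" using st by (auto simp: stochastic_def)
  have N2: "CARD('e) \<ge> 2" using card8 by simp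
  define N where "N = real CARD('e)"
  have Npos: "N > 0" using card8 by (simp add: N_def)
  define Nc where "Nc = (of_nat CARD('e) :: complex)"
  have NcN: "Nc = complex_of_real N" by (simp add: Nc_def N_def)
  have Nc0: "Nc \<noteq> 0" using Npos by (simp add: NcN)
  define X where "X n = (Lop Q ^^ n) Jmat" for n
  define Y where "Y n = (L0op Q ^^ n) Jmat" for n
  define tq where "tq n = trace ((X n - Y n) ** cmat Q)" for n
  define Dl where "Dl = Delta Q \<gamma>"
  have Dl0: "Dl \<ge> 0" using Delta_nonneg[OF st sym g0] by (simp add: Dl_def)
  define w where "w = N / (N + lam)"
  define P where "P = lam * N^2 / (2 * u * (1 - u) * (N + lam))"
  define M where "M = m * CARD('e)"
  have msX: "msum (X n) = msum (Jmat :: complex^'e^'e)" for n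
    by (induction n) (simp_all add: X_def msum_Lop[OF st])
  have msY: "msum (Y n) = msum (Jmat :: complex^'e^'e)" for n
    by (induction n) (simp_all add: Y_def msum_L0op[OF Qn(2) sym])
  have trX: "trace (X (Suc n)) = trace (X n) + 2 / Nc * trace (X n ** cmat Q)" for n
    using trace_Lop[OF st sym trQ, of "X n"] by (simp add: X_def Nc_def)
  have trY: "trace (Y (Suc n)) = trace (Y n) + 2 / Nc * trace (Y n ** cmat Q)" for n
    using trace_L0op[OF trQ, of "Y n"] by (simp add: Y_def Nc_def)
  have brk: "(S_beta u (X (n+1)) / Nc - S_beta u (X n) / Nc) - (S_beta u (Y (n+1)) / Nc - S_beta u (Y n) / Nc)
      = complex_of_real ((u - u^2) * 2 / N^2) * tq n" for n
  proof -
    have "(S_beta u (X (n+1)) / Nc - S_beta u (X n) / Nc) - (S_beta u (Y (n+1)) / Nc - S_beta u (Y n) / Nc)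
       = of_real (u - u^2) * 2 / Nc^2 * (trace (X n ** cmat Q) - trace (Y n ** cmat Q))"
      unfolding S_beta_formula Suc_eq_plus1[symmetric] trX trY msX msY using Nc0
      by (simp add: field_simps power2_eq_square)
    also have "\<dots> = complex_of_real ((u - u^2) * 2 / N^2) * tq n"
      unfolding trace_mul_sub tq_def NcN by simp
    finally show ?thesis .
  qed
  have tqb: "norm (tq n) \<le> 2 * Dl * (1 + 4 / N) ^ n" for n
    using norm_trace_Q[OF st, of "X n - Y n"] main_D[OF st sym g0 trQ N2, of n]
    by (simp add: tq_def X_def Y_def Dl_def N_def)
  have coefeq: "P * (u - u^2) * 2 / N^2 = 1 - w"
  proof -
    define v where "v = u * (1 - u)"
    have v0: "v > 0" using u0 u1 by (simp add: v_def)
    have h1: "u - u^2 = v" by (simp add: v_def power2_eq_square algebra_simps)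
    have h2: "P = lam * N^2 / (2 * v * (N + lam))" by (simp add: P_def v_def mult_ac)
    define L where "L = N + lam"
    have L0: "L > 0" using Npos lam0 by (simp add: L_def)
    have "P * (u - u^2) * 2 / N^2 = lam / L"
      unfolding h1 h2 L_def[symmetric] using v0 Npos L0 by (simp add: field_simps power2_eq_square)
    hence "P * (u - u^2) * 2 / N^2 = lam / (N + lam)" by (simp add: L_def)
    also have "\<dots> = 1 - w" using Npos lam0 by (simp add: w_def field_simps)
    finally show ?thesis .
  qed
  have w0: "0 \<le> w" "w < 1" using Npos lam0 by (auto simp: w_def)
  have LHS: "complex_of_real P * (\<Sum>n = 0..M. complex_of_real (w ^ n) *
          ((S_beta u (X (n+1)) / Nc - S_beta u (X n) / Nc) - (S_beta u (Y (n+1)) / Nc - S_beta u (Y n) / Nc)))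
      = (\<Sum>n = 0..M. complex_of_real ((1 - w) * w ^ n) * tq n)"
    unfolding brk sum_distrib_left
  proof (intro sum.cong refl)
    fix n
    have "complex_of_real P * (complex_of_real (w ^ n) * (complex_of_real ((u - u^2) * 2 / N^2) * tq n))
        = complex_of_real (P * (u - u^2) * 2 / N^2 * w ^ n) * tq n"
      by (simp add: mult_ac)
    thus "complex_of_real P * (complex_of_real (w ^ n) * (complex_of_real ((u - u^2) * 2 / N^2) * tq n))
        = complex_of_real ((1 - w) * w ^ n) * tq n" unfolding coefeq .
  qed
  have "norm (\<Sum>n = 0..M. complex_of_real ((1 - w) * w ^ n) * tq n)
      \<le> (\<Sum>n = 0..M. (1 - w) * w ^ n * (2 * Dl * (1 + 4 / N) ^ M))"
  proof (rule order_trans[OF norm_sum], intro sum_mono)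
    fix n assume "n \<in> {0..M}"
    hence nM: "n \<le> M" by simp
    have "(1 + 4 / N) ^ n \<le> (1 + 4 / N) ^ M" using Npos nM by (intro power_increasing) auto
    hence "norm (tq n) \<le> 2 * Dl * (1 + 4 / N) ^ M" using tqb[of n] Dl0
      by (meson mult_left_mono order_trans zero_le_mult_iff zero_le_numeral)
    moreover have nn: "0 \<le> (1 - w) * w ^ n" using w0 by simp
    moreover have "norm (complex_of_real ((1 - w) * w ^ n) * tq n) = (1 - w) * w ^ n * norm (tq n)"
      by (simp only: norm_mult norm_of_real abs_of_nonneg[OF nn])
    ultimately show "norm (complex_of_real ((1 - w) * w ^ n) * tq n) \<le> (1 - w) * w ^ n * (2 * Dl * (1 + 4 / N) ^ M)"
      by (simp add: mult_left_mono)
  qed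
  also have "\<dots> = (1 - w) * (\<Sum>n<Suc M. w ^ n) * (2 * Dl * (1 + 4 / N) ^ M)"
    by (simp add: sum_distrib_left sum_distrib_right atLeast0AtMost lessThan_Suc_atMost mult_ac)
  also have "(1 - w) * (\<Sum>n<Suc M. w ^ n) = 1 - w ^ Suc M"
    by (rule one_diff_power_eq[symmetric])
  also have "(1 - w ^ Suc M) * (2 * Dl * (1 + 4 / N) ^ M) \<le> 1 * (2 * Dl * (1 + 4 / N) ^ M)"
    using w0 Dl0 Npos by (intro mult_right_mono) auto
  also have "\<dots> \<le> 40 * Dl / (1 - u) * (1 + 6 / N) ^ M"
  proof -
    have "(1 + 4 / N) ^ M \<le> (1 + 6 / N) ^ M" using Npos by (intro power_mono) (auto simp: divide_right_mono)
    moreover have "2 \<le> 40 / (1 - u)" using u0 u1 by (simp add: le_divide_eq)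
    ultimately have "2 * (1 + 4 / N) ^ M \<le> 40 / (1 - u) * (1 + 6 / N) ^ M"
      using Npos u1 by (intro mult_mono) auto
    hence h: "Dl * (2 * (1 + 4 / N) ^ M) \<le> Dl * (40 / (1 - u) * (1 + 6 / N) ^ M)"
      by (rule mult_left_mono[OF _ Dl0])
    have e1: "1 * (2 * Dl * (1 + 4 / N) ^ M) = Dl * (2 * (1 + 4 / N) ^ M)" by simp
    have e2: "40 * Dl / (1 - u) * (1 + 6 / N) ^ M = Dl * (40 / (1 - u) * (1 + 6 / N) ^ M)" by simp
    show ?thesis unfolding e1 e2 by (rule h)
  qed
  finally have final: "norm (\<Sum>n = 0..M. complex_of_real ((1 - w) * w ^ n) * tq n) \<le> 40 * Dl / (1 - u) * (1 + 6 / N) ^ M" .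
  show ?thesis
    using final unfolding LHS[symmetric]
    by (simp add: P_def w_def N_def Nc_def X_def Y_def M_def Dl_def)
qed


end
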